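(* Let $I,J\subseteq S$ be spherical, let $P_I=B_+W_IB_+$ and $P_J=B_-W_JB_-$, and let $w\in W$. Then $[P_I\cap wP_Jw^{-1} : B_+\cap wB_-w^{-1}]<\infty$, and consequently $P_I\cap wP_Jw^{-1}$ is a finite group.
   Context: Standing setup: $(W,S)$ is a Coxeter system with finite $S=\{s_1,\dots,s_n\}$, word length $\ell$, and $m(s,t)$ the order of $st$; for $J\subseteq S$, $W_J=\langle J\rangle$, and $J$ is spherical if $W_J$ is finite. $(\Delta_+,\Delta_-,\delta^* )$ is a thick twin building of type $(W,S)$ with chamber sets $\mathcal{C}_\pm$, Weyl distances $\delta_\pm$ and codistance $\delta^*$. There are integers $q_i\ge2$ such that every $s_i$-panel contains exactly $q_i+1$ chambers; $q_{\min}=\min q_i$, $q_{\max}=\max q_i$. A group $G$ acts strongly transitively on the twin building, i.e. by automorphisms preserving $\delta_+,\delta_-,\delta^*$ and transitively on pairs $(\Sigma,C)$ with $\Sigma$ a twin apartment and $C$ a chamber of $\Sigma$. Fix opposite chambers $C_+\in\mathcal{C}_+$, $C_-\in\mathcal{C}_-$; let $\Sigma$ be the twin apartment containing them, $B_\pm=G_{C_\pm}$, $N=G_\Sigma$, $T=B_+\cap B_-$, which is assumed finite. Then $(B_+,B_-,N)$ is a twin BN-pair and $N/T\cong W$. For $w\in W$ choose $n\in N$ mapping to $w$ and write $wC_-=nC_-$ (so $\delta^*(C_+,wC_-)=w$) and $wHw^{-1}=nHn^{-1}$ for subgroups $H\supseteq T$ (independent of the choice of $n$); in particular $wB_-w^{-1}=G_{wC_-}$.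 For $J\subseteq S$, $B_\pm W_JB_\pm$ denotes the union of the double cosets $B_\pm nB_\pm$ with $n\in N$ mapping into $W_J$ (the stabilizer of the $J$-residue of $C_\pm$). *)

theory Defs
  imports "HOL-Algebra.Algebra"
begin

definition word_prod :: "('w, 'a) monoid_scheme \<Rightarrow> 'w list \<Rightarrow> 'w" where
  "word_prod W ws = foldr (\<lambda>s acc. s \<otimes>\<^bsub>W\<^esub> acc) ws \<one>\<^bsub>W\<^esub>"

definition cox_len :: "('w, 'a) monoid_scheme \<Rightarrow> 'w set \<Rightarrow> 'w \<Rightarrow> nat" where
  "cox_len W S w = (LEAST k. \<exists>ws. set ws \<subseteq> S \<and> length ws = k \<and> word_prod W ws = w)"

definition alt_word :: "'w \<Rightarrow> 'w \<Rightarrow> nat \<Rightarrow> 'w list" where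
  "alt_word s t m = concat (replicate m [s, t])"

text \<open>The monoid congruence on words over S generated by the Coxeter relations
  s s = 1 and (s t)^{m(s,t)} = 1, where m(s,t) is the order of s t in W
  (no relation when the order is infinite).\<close>
inductive_set cox_rel :: "('w, 'a) monoid_scheme \<Rightarrow> 'w set \<Rightarrow> ('w list \<times> 'w list) set"
  for W :: "('w, 'a) monoid_scheme" and S :: "'w set" where
  refl: "set u \<subseteq> S \<Longrightarrow> (u, u) \<in> cox_rel W S"
| sym: "(u, v) \<in> cox_rel W S \<Longrightarrow> (v, u) \<in> cox_rel W S"
| trans: "(u, v) \<in> cox_rel W S \<Longrightarrow> (v, x) \<in> cox_rel W S \<Longrightarrow> (u, x) \<in> cox_rel W S"
| ctxt: "(u, v) \<in> cox_rel W S \<Longrightarrow> set a \<subseteq> S \<Longrightarrow> set b \<subseteq> S \<Longrightarrow> (a @ u @ b, a @ v @ b) \<in> cox_rel W S"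
| invol: "s \<in> S \<Longrightarrow> ([s, s], []) \<in> cox_rel W S"
| braid: "s \<in> S \<Longrightarrow> t \<in> S \<Longrightarrow> group.ord W (s \<otimes>\<^bsub>W\<^esub> t) = m \<Longrightarrow> m > 0 \<Longrightarrow>
           (alt_word s t m, []) \<in> cox_rel W S"

text \<open>(W,S) is a Coxeter system with finite S: W is generated by the involutions in S and
  is presented by the relations (st)^{m(s,t)} = 1 (two words over S have the same product iff
  they are congruent modulo the relations).\<close>
definition coxeter_system :: "('w, 'a) monoid_scheme \<Rightarrow> 'w set \<Rightarrow> bool" where
  "coxeter_system W S \<longleftrightarrow> group W \<and> finite S \<and> S \<subseteq> carrier W \<and> \<one>\<^bsub>W\<^esub> \<notin> S \<and>
     (\<forall>s\<in>S. s \<otimes>\<^bsub>W\<^esub> s = \<one>\<^bsub>W\<^esub>) \<and> generate W S = carrier W \<and>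
     (\<forall>u v. set u \<subseteq> S \<longrightarrow> set v \<subseteq> S \<longrightarrow> word_prod W u = word_prod W v \<longrightarrow> (u, v) \<in> cox_rel W S)"

definition building :: "('w, 'a) monoid_scheme \<Rightarrow> 'w set \<Rightarrow> 'c set \<Rightarrow> ('c \<Rightarrow> 'c \<Rightarrow> 'w) \<Rightarrow> bool" where
  "building W S C \<delta> \<longleftrightarrow>
     (\<forall>x\<in>C. \<forall>y\<in>C. \<delta> x y \<in> carrier W) \<and>
     (\<forall>x\<in>C. \<forall>y\<in>C. \<delta> x y = \<one>\<^bsub>W\<^esub> \<longleftrightarrow> x = y) \<and>
     (\<forall>x\<in>C. \<forall>y\<in>C. \<forall>x'\<in>C. \<forall>s\<in>S. \<delta> x' x = s \<longrightarrow>
        (\<delta> x' y = s \<otimes>\<^bsub>W\<^esub> \<delta> x y \<or> \<delta> x' y = \<delta> x y) \<and>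
        (cox_len W S (s \<otimes>\<^bsub>W\<^esub> \<delta> x y) = cox_len W S (\<delta> x y) + 1 \<longrightarrow> \<delta> x' y = s \<otimes>\<^bsub>W\<^esub> \<delta> x y)) \<and>
     (\<forall>x\<in>C. \<forall>y\<in>C. \<forall>s\<in>S. \<exists>x'\<in>C. \<delta> x' x = s \<and> \<delta> x' y = s \<otimes>\<^bsub>W\<^esub> \<delta> x y)"

definition twin_half :: "('w, 'a) monoid_scheme \<Rightarrow> 'w set \<Rightarrow> 'c set \<Rightarrow> ('c \<Rightarrow> 'c \<Rightarrow> 'w) \<Rightarrow> 'c set \<Rightarrow>
    ('c \<Rightarrow> 'c \<Rightarrow> 'w) \<Rightarrow> bool" where
  "twin_half W S C \<delta> D \<delta>s \<longleftrightarrow>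
     (\<forall>x\<in>C. \<forall>y\<in>D. \<forall>x'\<in>C. \<forall>s\<in>S. \<delta> x' x = s \<longrightarrow>
        cox_len W S (s \<otimes>\<^bsub>W\<^esub> \<delta>s x y) + 1 = cox_len W S (\<delta>s x y) \<longrightarrow> \<delta>s x' y = s \<otimes>\<^bsub>W\<^esub> \<delta>s x y) \<and>
     (\<forall>x\<in>C. \<forall>y\<in>D. \<forall>s\<in>S. \<exists>x'\<in>C. \<delta> x' x = s \<and> \<delta>s x' y = s \<otimes>\<^bsub>W\<^esub> \<delta>s x y)"

definition twin_building :: "('w, 'a) monoid_scheme \<Rightarrow> 'w set \<Rightarrow> 'c set \<Rightarrow> ('c \<Rightarrow> 'c \<Rightarrow> 'w) \<Rightarrow>
    'c set \<Rightarrow> ('c \<Rightarrow> 'c \<Rightarrow> 'w) \<Rightarrow> ('c \<Rightarrow> 'c \<Rightarrow> 'w) \<Rightarrow> bool" where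
  "twin_building W S Cp \<delta>p Cm \<delta>m \<delta>s \<longleftrightarrow>
     coxeter_system W S \<and> Cp \<inter> Cm = {} \<and> building W S Cp \<delta>p \<and> building W S Cm \<delta>m \<and>
     (\<forall>x\<in>Cp. \<forall>y\<in>Cm. \<delta>s x y \<in> carrier W \<and> \<delta>s y x = inv\<^bsub>W\<^esub> (\<delta>s x y)) \<and>
     twin_half W S Cp \<delta>p Cm \<delta>s \<and> twin_half W S Cm \<delta>m Cp \<delta>s"

definition panel :: "('w, 'a) monoid_scheme \<Rightarrow> 'c set \<Rightarrow> ('c \<Rightarrow> 'c \<Rightarrow> 'w) \<Rightarrow> 'w \<Rightarrow> 'c \<Rightarrow> 'c set" where
  "panel W C \<delta> s x = {y \<in> C. \<delta> x y = \<one>\<^bsub>W\<^esub> \<or> \<delta> x y = s}"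

definition panel_sizes :: "('w, 'a) monoid_scheme \<Rightarrow> 'w set \<Rightarrow> 'c set \<Rightarrow> ('c \<Rightarrow> 'c \<Rightarrow> 'w) \<Rightarrow>
    'c set \<Rightarrow> ('c \<Rightarrow> 'c \<Rightarrow> 'w) \<Rightarrow> ('w \<Rightarrow> nat) \<Rightarrow> bool" where
  "panel_sizes W S Cp \<delta>p Cm \<delta>m q \<longleftrightarrow>
     (\<forall>s\<in>S. q s \<ge> 2 \<and> (\<forall>x\<in>Cp. card (panel W Cp \<delta>p s x) = q s + 1) \<and>
                       (\<forall>x\<in>Cm. card (panel W Cm \<delta>m s x) = q s + 1))"

text \<open>Twin apartments: images of isometries of the standard thin twin building of type (W,S),
  i.e. W x {+,-} with \<delta>(u,v) = u^{-1} v in each half and \<delta>*(u,v) = u^{-1} v.\<close>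
definition twin_apartment :: "('w, 'a) monoid_scheme \<Rightarrow> 'c set \<Rightarrow> ('c \<Rightarrow> 'c \<Rightarrow> 'w) \<Rightarrow>
    'c set \<Rightarrow> ('c \<Rightarrow> 'c \<Rightarrow> 'w) \<Rightarrow> ('c \<Rightarrow> 'c \<Rightarrow> 'w) \<Rightarrow> 'c set \<Rightarrow> bool" where
  "twin_apartment W Cp \<delta>p Cm \<delta>m \<delta>s \<Sigma> \<longleftrightarrow>
     (\<exists>f g. (\<forall>u\<in>carrier W. f u \<in> Cp \<and> g u \<in> Cm) \<and>
       (\<forall>u\<in>carrier W. \<forall>v\<in>carrier W.
          \<delta>p (f u) (f v) = inv\<^bsub>W\<^esub> u \<otimes>\<^bsub>W\<^esub> v \<and> \<delta>m (g u) (g v) = inv\<^bsub>W\<^esub> u \<otimes>\<^bsub>W\<^esub> v \<and>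
          \<delta>s (f u) (g v) = inv\<^bsub>W\<^esub> u \<otimes>\<^bsub>W\<^esub> v \<and> \<delta>s (g u) (f v) = inv\<^bsub>W\<^esub> u \<otimes>\<^bsub>W\<^esub> v) \<and>
       \<Sigma> = f ` carrier W \<union> g ` carrier W)"

definition strongly_transitive_action :: "('g, 'b) monoid_scheme \<Rightarrow> ('g \<Rightarrow> 'c \<Rightarrow> 'c) \<Rightarrow>
    ('w, 'a) monoid_scheme \<Rightarrow> 'c set \<Rightarrow> ('c \<Rightarrow> 'c \<Rightarrow> 'w) \<Rightarrow> 'c set \<Rightarrow> ('c \<Rightarrow> 'c \<Rightarrow> 'w) \<Rightarrow>
    ('c \<Rightarrow> 'c \<Rightarrow> 'w) \<Rightarrow> bool" where
  "strongly_transitive_action G act W Cp \<delta>p Cm \<delta>m \<delta>s \<longleftrightarrow>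
     group G \<and>
     (\<forall>g\<in>carrier G. (\<forall>x\<in>Cp. act g x \<in> Cp) \<and> (\<forall>x\<in>Cm. act g x \<in> Cm)) \<and>
     (\<forall>x\<in>Cp \<union> Cm. act \<one>\<^bsub>G\<^esub> x = x) \<and>
     (\<forall>g\<in>carrier G. \<forall>h\<in>carrier G. \<forall>x\<in>Cp \<union> Cm. act (g \<otimes>\<^bsub>G\<^esub> h) x = act g (act h x)) \<and>
     (\<forall>g\<in>carrier G.
        (\<forall>x\<in>Cp. \<forall>y\<in>Cp. \<delta>p (act g x) (act g y) = \<delta>p x y) \<and>
        (\<forall>x\<in>Cm. \<forall>y\<in>Cm. \<delta>m (act g x) (act g y) = \<delta>m x y) \<and>
        (\<forall>x\<in>Cp. \<forall>y\<in>Cm. \<delta>s (act g x) (act g y) = \<delta>s x y \<and> \<delta>s (act g y) (act g x) = \<delta>s y x)) \<and>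
     (\<forall>\<Sigma> \<Sigma>' x x'. twin_apartment W Cp \<delta>p Cm \<delta>m \<delta>s \<Sigma> \<longrightarrow> twin_apartment W Cp \<delta>p Cm \<delta>m \<delta>s \<Sigma>' \<longrightarrow>
        x \<in> \<Sigma> \<longrightarrow> x' \<in> \<Sigma>' \<longrightarrow> (x \<in> Cp \<and> x' \<in> Cp \<or> x \<in> Cm \<and> x' \<in> Cm) \<longrightarrow>
        (\<exists>g\<in>carrier G. act g ` \<Sigma> = \<Sigma>' \<and> act g x = x'))"

definition chamber_stab :: "('g, 'b) monoid_scheme \<Rightarrow> ('g \<Rightarrow> 'c \<Rightarrow> 'c) \<Rightarrow> 'c \<Rightarrow> 'g set" where
  "chamber_stab G act x = {g \<in> carrier G. act g x = x}"

definition set_stab :: "('g, 'b) monoid_scheme \<Rightarrow> ('g \<Rightarrow> 'c \<Rightarrow> 'c) \<Rightarrow> 'c set \<Rightarrow> 'g set" where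
  "set_stab G act \<Sigma> = {g \<in> carrier G. act g ` \<Sigma> = \<Sigma>}"

text \<open>B W_Y B: union of the double cosets B n B over n in N whose image in W
  (namely \<delta>*(C_+, n C_-)) lies in the subgroup Y.\<close>
definition double_coset_union :: "('g, 'b) monoid_scheme \<Rightarrow> ('g \<Rightarrow> 'c \<Rightarrow> 'c) \<Rightarrow>
    ('c \<Rightarrow> 'c \<Rightarrow> 'w) \<Rightarrow> 'c \<Rightarrow> 'c \<Rightarrow> 'g set \<Rightarrow> 'g set \<Rightarrow> 'w set \<Rightarrow> 'g set" where
  "double_coset_union G act \<delta>s cp cm B N Y =
     (\<Union>n' \<in> {n'. n' \<in> N \<and> \<delta>s cp (act n' cm) \<in> Y}. set_mult G B (l_coset G n' B))"

definition conjset :: "('g, 'b) monoid_scheme \<Rightarrow> 'g \<Rightarrow> 'g set \<Rightarrow> 'g set" where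
  "conjset G n H = r_coset G (l_coset G n H) (inv\<^bsub>G\<^esub> n)"

end

theory Submission
  imports Defs
begin



locale coxsys = group +
  fixes S
  assumes cs: "coxeter_system G S"
begin

lemma S_sub: "S \<subseteq> carrier G" and S_inv1: "s \<in> S \<Longrightarrow> s \<otimes> s = \<one>"
  and one_notin: "\<one> \<notin> S" and finS: "finite S" and genS: "generate G S = carrier G"
  and pres: "set u \<subseteq> S \<Longrightarrow> set v \<subseteq> S \<Longrightarrow> word_prod G u = word_prod G v \<Longrightarrow> (u, v) \<in> cox_rel G S"
  using cs unfolding coxeter_system_def by blast+

lemma S_carr: "s \<in> S \<Longrightarrow> s \<in> carrier G" using S_sub by auto

lemma S_inv: "s \<in> S \<Longrightarrow> inv s = s"
  by (metis S_carr S_inv1 inv_char)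

lemma wp_Nil[simp]: "word_prod G [] = \<one>" by (simp add: word_prod_def)
lemma wp_Cons[simp]: "word_prod G (s # ws) = s \<otimes> word_prod G ws" by (simp add: word_prod_def)

lemma wp_closed: "set ws \<subseteq> S \<Longrightarrow> word_prod G ws \<in> carrier G"
  by (induction ws) (auto intro: S_carr)

lemma wp_append: "set xs \<subseteq> S \<Longrightarrow> set ys \<subseteq> S \<Longrightarrow>
    word_prod G (xs @ ys) = word_prod G xs \<otimes> word_prod G ys"
  by (induction xs) (auto simp: m_assoc wp_closed S_carr)

lemma wp_rev: "set ws \<subseteq> S \<Longrightarrow> inv (word_prod G ws) = word_prod G (rev ws)"
proof (induction ws)
  case Nil then show ?case by simp
next
  case (Cons s ws)
  then have s: "s \<in> S" and ws: "set ws \<subseteq> S" by auto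
  have "inv (word_prod G (s # ws)) = inv (word_prod G ws) \<otimes> inv s"
    using s ws by (simp add: inv_mult_group wp_closed S_carr)
  also have "\<dots> = word_prod G (rev ws) \<otimes> word_prod G [s]"
    using Cons s by (simp add: S_inv S_carr)
  also have "\<dots> = word_prod G (rev ws @ [s])" using s ws by (simp add: wp_append)
  finally show ?case by simp
qed

lemma gen_words: "h \<in> generate G Xs \<Longrightarrow> Xs \<subseteq> S \<Longrightarrow> \<exists>ws. set ws \<subseteq> Xs \<and> word_prod G ws = h"
proof (induction rule: generate.induct)
  case one then show ?case by (intro exI[of _ "[]"]) simp
next
  case (incl h) then have "h \<in> carrier G" using S_carr by auto
  with incl show ?case by (intro exI[of _ "[h]"]) auto
next
  case (inv h) then have "h \<in> carrier G" "h \<in> S" using S_carr by auto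
  with inv show ?case by (intro exI[of _ "[h]"]) (auto simp: S_inv)
next
  case (eng h1 h2)
  then obtain w1 w2 where "set w1 \<subseteq> Xs" "word_prod G w1 = h1" "set w2 \<subseteq> Xs" "word_prod G w2 = h2" by blast
  with eng show ?case by (intro exI[of _ "w1 @ w2"]) (auto simp: wp_append)
qed

lemma words_gen: "Xs \<subseteq> S \<Longrightarrow> set ws \<subseteq> Xs \<Longrightarrow> word_prod G ws \<in> generate G Xs"
  by (induction ws) (auto intro: generate.one generate.incl generate.eng)

lemma carr_words: "w \<in> carrier G \<Longrightarrow> \<exists>ws. set ws \<subseteq> S \<and> word_prod G ws = w"
  using gen_words[of w S] genS by auto

abbreviation len where "len \<equiv> cox_len G S"

lemma len_exists: assumes "w \<in> carrier G"
  shows "\<exists>ws. set ws \<subseteq> S \<and> length ws = len w \<and> word_prod G ws = w"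
proof -
  obtain ws where "set ws \<subseteq> S" "word_prod G ws = w" using carr_words assms by blast
  then have "\<exists>k ws. set ws \<subseteq> S \<and> length ws = k \<and> word_prod G ws = w" by blast
  then show ?thesis unfolding cox_len_def by (rule LeastI_ex)
qed

lemma len_le: "set ws \<subseteq> S \<Longrightarrow> len (word_prod G ws) \<le> length ws"
  unfolding cox_len_def by (rule Least_le) blast

lemma len_one[simp]: "len \<one> = 0"
  using len_le[of "[]"] by simp

lemma len_zero: "w \<in> carrier G \<Longrightarrow> len w = 0 \<Longrightarrow> w = \<one>"
  using len_exists by fastforce

lemma len_inv_le: assumes "x \<in> carrier G" shows "len (inv x) \<le> len x"
proof -
  obtain ws where ws: "set ws \<subseteq> S" "length ws = len x" "word_prod G ws = x" using len_exists assms by blast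
  have "inv x = word_prod G (rev ws)" using wp_rev[OF ws(1)] ws(3) by simp
  moreover have "len (word_prod G (rev ws)) \<le> length (rev ws)" using len_le[of "rev ws"] ws(1) by simp
  ultimately show ?thesis using ws(2) by simp
qed

lemma len_inv: assumes "w \<in> carrier G" shows "len (inv w) = len w"
proof -
  have "len (inv (inv w)) \<le> len (inv w)" using len_inv_le assms by blast
  then have "len w \<le> len (inv w)" using assms by simp
  with len_inv_le[OF assms] show ?thesis by linarith
qed

lemma len_mult: assumes "a \<in> carrier G" "b \<in> carrier G" shows "len (a \<otimes> b) \<le> len a + len b"
proof -
  obtain u where "set u \<subseteq> S" "length u = len a" "word_prod G u = a" using len_exists assms by blast
  moreover obtain v where "set v \<subseteq> S" "length v = len b" "word_prod G v = b" using len_exists assms by blast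
  ultimately show ?thesis using len_le[of "u @ v"] by (simp add: wp_append)
qed

lemma len_S: "s \<in> S \<Longrightarrow> len s = 1"
proof -
  assume s: "s \<in> S"
  have "len s \<le> 1" using len_le[of "[s]"] s S_carr by simp
  moreover have "len s \<noteq> 0" using len_zero[of s] s one_notin S_carr by auto
  ultimately show ?thesis by simp
qed

lemma rel_parity: "(u, v) \<in> cox_rel G S \<Longrightarrow> even (length u) = even (length v)"
  by (induction rule: cox_rel.induct) (auto simp: alt_word_def length_concat sum_list_replicate)

lemma word_parity: "set u \<subseteq> S \<Longrightarrow> set v \<subseteq> S \<Longrightarrow> word_prod G u = word_prod G v \<Longrightarrow>
   even (length u) = even (length v)"
  using pres rel_parity by blast

lemma par_aux: "even (x::nat) = even (y+1) \<Longrightarrow> y \<le> x+1 \<Longrightarrow> x \<le> y+1 \<Longrightarrow> y = x+1 \<or> x = y+1"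
  by presburger

lemma len_sw: assumes s: "s \<in> S" and w: "w \<in> carrier G"
  shows "len (s \<otimes> w) = len w + 1 \<or> len w = len (s \<otimes> w) + 1"
proof -
  have sw: "s \<otimes> w \<in> carrier G" using s w S_carr by auto
  have a: "len (s \<otimes> w) \<le> len w + 1" using len_mult[of s w] s w S_carr len_S by auto
  have e: "s \<otimes> (s \<otimes> w) = w" using s w S_carr S_inv1 by (simp add: m_assoc[symmetric])
  have b: "len w \<le> len (s \<otimes> w) + 1" using len_mult[of s "s \<otimes> w"] s sw S_carr len_S e by auto
  obtain u where u: "set u \<subseteq> S" "length u = len w" "word_prod G u = w" using len_exists w by blast
  obtain v where v: "set v \<subseteq> S" "length v = len (s \<otimes> w)" "word_prod G v = s \<otimes> w" using len_exists sw by blast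
  have "even (length u) = even (length (s # v))"
    using word_parity[of u "s # v"] u v s e by simp
  then have "even (len w) = even (len (s \<otimes> w) + 1)" using u v by simp
  with a b show ?thesis using par_aux by blast
qed

lemma len_ws: assumes s: "s \<in> S" and w: "w \<in> carrier G"
  shows "len (w \<otimes> s) = len w + 1 \<or> len w = len (w \<otimes> s) + 1"
proof -
  have "inv (w \<otimes> s) = s \<otimes> inv w" using s w S_carr by (simp add: inv_mult_group S_inv)
  then show ?thesis using len_sw[of s "inv w"] len_inv[of w] len_inv[of "w \<otimes> s"] s w S_carr by auto
qed

lemma left_descent: assumes "w \<in> carrier G" "w \<noteq> \<one>"
  shows "\<exists>s\<in>S. len (s \<otimes> w) + 1 = len w"
proof -
  obtain u where u: "set u \<subseteq> S" "length u = len w" "word_prod G u = w" using len_exists assms by blast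
  then obtain s u' where su: "u = s # u'" using assms by (cases u) auto
  have s: "s \<in> S" and u': "set u' \<subseteq> S" using u su by auto
  have "w = s \<otimes> word_prod G u'" using u su by simp
  then have "s \<otimes> w = (s \<otimes> s) \<otimes> word_prod G u'" using s u' S_carr wp_closed by (simp add: m_assoc)
  then have "s \<otimes> w = word_prod G u'" using s u' S_inv1 wp_closed by simp
  then have "len (s \<otimes> w) \<le> length u'" using len_le u' by simp
  then show ?thesis using len_sw[OF s assms(1)] u su s by auto
qed

lemma right_descent: assumes "w \<in> carrier G" "w \<noteq> \<one>"
  shows "\<exists>s\<in>S. len (w \<otimes> s) + 1 = len w"
proof -
  obtain s where s: "s \<in> S" "len (s \<otimes> inv w) + 1 = len (inv w)"
    using left_descent[of "inv w"] assms by (metis inv_closed inv_eq_1_iff)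
  have ws: "w \<otimes> s \<in> carrier G" using s assms S_carr by auto
  have "inv (w \<otimes> s) = s \<otimes> inv w" using s assms S_carr by (simp add: inv_mult_group S_inv)
  then have "len (w \<otimes> s) = len (s \<otimes> inv w)" using len_inv[OF ws] by simp
  moreover have "len (inv w) = len w" using len_inv assms by simp
  ultimately show ?thesis using s by metis
qed

lemma inv_aS: "a \<in> carrier G \<Longrightarrow> s \<in> S \<Longrightarrow> inv (a \<otimes> s) = s \<otimes> inv a"
  by (simp add: inv_mult_group S_inv S_carr)
lemma inv_Sa: "a \<in> carrier G \<Longrightarrow> s \<in> S \<Longrightarrow> inv (s \<otimes> a) = inv a \<otimes> s"
  by (simp add: inv_mult_group S_inv S_carr)
lemma aSS: "a \<in> carrier G \<Longrightarrow> s \<in> S \<Longrightarrow> (a \<otimes> s) \<otimes> s = a"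
  by (simp add: m_assoc S_inv1 S_carr)
lemma SSa: "a \<in> carrier G \<Longrightarrow> s \<in> S \<Longrightarrow> s \<otimes> (s \<otimes> a) = a"
  by (simp add: m_assoc[symmetric] S_inv1 S_carr)
lemma S_neq1: "a \<in> carrier G \<Longrightarrow> s \<in> S \<Longrightarrow> a \<otimes> s \<noteq> a"
  using one_notin by (metis S_carr l_cancel_one' r_one)
lemma S_neq1': "a \<in> carrier G \<Longrightarrow> s \<in> S \<Longrightarrow> s \<otimes> a \<noteq> a"
  using one_notin by (metis S_carr r_cancel_one' l_one)

end



context coxsys begin

definition red :: "'a list \<Rightarrow> bool" where
  "red ws \<longleftrightarrow> set ws \<subseteq> S \<and> len (word_prod G ws) = length ws"

lemma red_append: assumes "red (a @ b)" shows "red a" "red b"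
proof -
  have sa: "set a \<subseteq> S" and sb: "set b \<subseteq> S" using assms unfolding red_def by auto
  have "len (word_prod G (a @ b)) \<le> len (word_prod G a) + len (word_prod G b)"
    using wp_append[OF sa sb] len_mult[OF wp_closed[OF sa] wp_closed[OF sb]] by simp
  moreover have "len (word_prod G a) \<le> length a" "len (word_prod G b) \<le> length b"
    using len_le sa sb by auto
  moreover have "len (word_prod G (a @ b)) = length a + length b" using assms unfolding red_def by simp
  ultimately show "red a" "red b" unfolding red_def using sa sb by auto
qed

lemma red_rev: assumes "red ws" shows "red (rev ws)"
proof -
  have s: "set ws \<subseteq> S" using assms red_def by auto
  have "word_prod G (rev ws) = inv (word_prod G ws)" using wp_rev[OF s] by simp
  then have "len (word_prod G (rev ws)) = len (word_prod G ws)" using len_inv wp_closed[OF s] by simp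
  then show ?thesis using assms s unfolding red_def by simp
qed

lemma red_exists: "w \<in> carrier G \<Longrightarrow> \<exists>ws. red ws \<and> word_prod G ws = w"
  using len_exists unfolding red_def by metis

end

locale bldg = coxsys +
  fixes C :: "'c set" and \<delta> :: "'c \<Rightarrow> 'c \<Rightarrow> 'a"
  assumes bd: "building G S C \<delta>"
begin

lemma d_carr: "x \<in> C \<Longrightarrow> y \<in> C \<Longrightarrow> \<delta> x y \<in> carrier G"
  and d_one: "x \<in> C \<Longrightarrow> y \<in> C \<Longrightarrow> \<delta> x y = \<one> \<longleftrightarrow> x = y"
  and WD2a: "x \<in> C \<Longrightarrow> y \<in> C \<Longrightarrow> x' \<in> C \<Longrightarrow> s \<in> S \<Longrightarrow> \<delta> x' x = s \<Longrightarrow>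
      \<delta> x' y = s \<otimes> \<delta> x y \<or> \<delta> x' y = \<delta> x y"
  and WD2b: "x \<in> C \<Longrightarrow> y \<in> C \<Longrightarrow> x' \<in> C \<Longrightarrow> s \<in> S \<Longrightarrow> \<delta> x' x = s \<Longrightarrow>
      len (s \<otimes> \<delta> x y) = len (\<delta> x y) + 1 \<Longrightarrow> \<delta> x' y = s \<otimes> \<delta> x y"
  and WD3: "x \<in> C \<Longrightarrow> y \<in> C \<Longrightarrow> s \<in> S \<Longrightarrow> \<exists>x'\<in>C. \<delta> x' x = s \<and> \<delta> x' y = s \<otimes> \<delta> x y"
  using bd unfolding building_def by blast+

lemma d_refl[simp]: "x \<in> C \<Longrightarrow> \<delta> x x = \<one>" using d_one by blast

lemma adj_sym: assumes "x \<in> C" "x' \<in> C" "s \<in> S" "\<delta> x' x = s" shows "\<delta> x x' = s"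
proof -
  have "\<delta> x' x' = s \<otimes> \<delta> x x' \<or> \<delta> x' x' = \<delta> x x'" using WD2a[of x x' x' s] assms by blast
  then have "\<one> = s \<otimes> \<delta> x x' \<or> \<one> = \<delta> x x'" using assms by simp
  moreover have "\<one> \<noteq> \<delta> x x'"
  proof
    assume "\<one> = \<delta> x x'" then have "x = x'" using d_one assms by metis
    then show False using assms one_notin by simp
  qed
  ultimately have e: "\<one> = s \<otimes> \<delta> x x'" by blast
  have "\<delta> x x' = s \<otimes> (s \<otimes> \<delta> x x')" using assms S_inv1 S_carr d_carr
    by (simp add: m_assoc[symmetric])
  then show ?thesis using e[symmetric] assms S_carr by simp
qed

lemma gal: "red (pre @ rest) \<Longrightarrow> xi \<in> C \<Longrightarrow> y \<in> C \<Longrightarrow> x0 \<in> C \<Longrightarrow>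
   \<delta> xi y = word_prod G rest \<Longrightarrow> \<delta> xi x0 = word_prod G (rev pre) \<Longrightarrow>
   \<delta> y x0 = word_prod G (rev (pre @ rest))"
proof (induction rest arbitrary: pre xi)
  case Nil
  then have "xi = y" using d_one by simp
  then show ?case using Nil by simp
next
  case (Cons s rest)
  have sS: "s \<in> S" and rS: "set rest \<subseteq> S" and pS: "set pre \<subseteq> S" using Cons.prems(1) unfolding red_def by auto
  obtain x' where x': "x' \<in> C" "\<delta> x' xi = s" "\<delta> x' y = s \<otimes> \<delta> xi y" using WD3[OF Cons.prems(2,3) sS] by blast
  have "\<delta> x' y = s \<otimes> (s \<otimes> word_prod G rest)" using x'(3) Cons.prems(5) by simp
  also have "\<dots> = word_prod G rest" using sS rS S_inv1 S_carr wp_closed by (simp add: m_assoc[symmetric])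
  finally have y': "\<delta> x' y = word_prod G rest" .
  have r1: "red (rev (pre @ s # rest))" using red_rev Cons.prems(1) by blast
  have "rev (pre @ s # rest) = rev rest @ (s # rev pre)" by simp
  then have r2: "red (s # rev pre)" using r1 red_append by metis
  have r3: "red (rev pre)" using r2 red_append[of "[s]" "rev pre"] by simp
  have "len (s \<otimes> \<delta> xi x0) = len (\<delta> xi x0) + 1"
    using r2 r3 Cons.prems(6) unfolding red_def by simp
  then have "\<delta> x' x0 = s \<otimes> \<delta> xi x0" using WD2b[OF Cons.prems(2,4) x'(1) sS x'(2)] by blast
  then have x0': "\<delta> x' x0 = word_prod G (rev (pre @ [s]))"
    using Cons.prems(6) sS pS by (simp add: wp_append)
  have "red ((pre @ [s]) @ rest)" using Cons.prems(1) by simp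
  from Cons.IH[OF this x'(1) Cons.prems(3,4) y' x0'] show ?case by simp
qed

lemma d_sym: assumes "x \<in> C" "y \<in> C" shows "\<delta> y x = inv (\<delta> x y)"
proof -
  obtain ws where ws: "red ws" "word_prod G ws = \<delta> x y" using red_exists d_carr assms by blast
  have "\<delta> y x = word_prod G (rev ([] @ ws))"
    by (rule gal[of "[]" ws x y x]) (use ws assms in auto)
  moreover have "set ws \<subseteq> S" using ws red_def by auto
  ultimately show ?thesis using wp_rev[of ws] ws(2) by simp
qed

lemma residue: assumes "Xs \<subseteq> S" "x \<in> C" "y \<in> C" "z \<in> C"
  "\<delta> x y \<in> generate G Xs" "\<delta> y z \<in> generate G Xs" shows "\<delta> x z \<in> generate G Xs"
proof -
  obtain ws where ws: "set ws \<subseteq> Xs" "word_prod G ws = \<delta> x y" using gen_words assms by blast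
  have key: "set ws \<subseteq> Xs \<Longrightarrow> x \<in> C \<Longrightarrow> \<delta> x y = word_prod G ws \<Longrightarrow> \<delta> x z \<in> generate G Xs" for ws x
  proof (induction ws arbitrary: x)
    case Nil then have "x = y" using assms d_one by auto
    then show ?case using assms by simp
  next
    case (Cons s ws)
    have sX: "s \<in> Xs" and wX: "set ws \<subseteq> Xs" using Cons.prems by auto
    have sS: "s \<in> S" and wS: "set ws \<subseteq> S" using sX wX assms(1) by auto
    obtain x1 where x1: "x1 \<in> C" "\<delta> x1 x = s" "\<delta> x1 y = s \<otimes> \<delta> x y" using WD3[OF Cons.prems(2) assms(3) sS] by blast
    have "\<delta> x1 y = s \<otimes> (s \<otimes> word_prod G ws)" using x1(3) Cons.prems(3) by simp
    also have "\<dots> = word_prod G ws" using sS wS S_inv1 S_carr wp_closed by (simp add: m_assoc[symmetric])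
    finally have "\<delta> x1 y = word_prod G ws" .
    then have z1: "\<delta> x1 z \<in> generate G Xs" using Cons.IH[OF wX x1(1)] by blast
    have "\<delta> x x1 = s" using adj_sym[OF Cons.prems(2) x1(1) sS x1(2)] .
    then have "\<delta> x z = s \<otimes> \<delta> x1 z \<or> \<delta> x z = \<delta> x1 z" using WD2a[OF x1(1) assms(4) Cons.prems(2) sS] by blast
    then show ?case using z1 sX generate.incl[of s Xs G] generate.eng by metis
  qed
  show ?thesis using key ws assms by auto
qed

lemma panel_trans: assumes "x \<in> C" "x' \<in> C" "x1 \<in> C" "s \<in> S" "\<delta> x' x = s" "\<delta> x1 x = s" "x' \<noteq> x1"
  shows "\<delta> x' x1 = s"
proof -
  have a: "\<delta> x x1 = s" using adj_sym assms by blast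
  have "\<delta> x' x1 = s \<otimes> \<delta> x x1 \<or> \<delta> x' x1 = \<delta> x x1" using WD2a[OF assms(1,3,2,4,5)] .
  moreover have "s \<otimes> \<delta> x x1 = \<one>" using a S_inv1 assms by simp
  moreover have "\<delta> x' x1 \<noteq> \<one>" using d_one assms by blast
  ultimately show ?thesis using a by auto
qed

lemma sphere_finite:
  assumes pf: "\<And>s x. s \<in> S \<Longrightarrow> x \<in> C \<Longrightarrow> finite (panel G C \<delta> s x)"
  shows "w \<in> carrier G \<Longrightarrow> x \<in> C \<Longrightarrow> finite {y \<in> C. \<delta> x y = w}"
proof (induction "len w" arbitrary: w x rule: less_induct)
  case less
  show ?case
  proof (cases "w = \<one>")
    case True
    then have "{y \<in> C. \<delta> x y = w} \<subseteq> {x}" using d_one less.prems by auto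
    then show ?thesis using finite_subset by blast
  next
    case False
    obtain s where s: "s \<in> S" "len (s \<otimes> w) + 1 = len w" using left_descent[OF less.prems(1) False] by blast
    have sw: "s \<otimes> w \<in> carrier G" using s less.prems S_carr by auto
    have sub: "{y \<in> C. \<delta> x y = w} \<subseteq> (\<Union>x'\<in>panel G C \<delta> s x. {y \<in> C. \<delta> x' y = s \<otimes> w})"
    proof
      fix y assume y: "y \<in> {y \<in> C. \<delta> x y = w}"
      obtain x' where x': "x' \<in> C" "\<delta> x' x = s" "\<delta> x' y = s \<otimes> \<delta> x y" using WD3[OF less.prems(2) _ s(1)] y by blast
      have "\<delta> x x' = s" using adj_sym[OF less.prems(2) x'(1) s(1) x'(2)] .
      then have "x' \<in> panel G C \<delta> s x" unfolding panel_def using x' by auto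
      then show "y \<in> (\<Union>x'\<in>panel G C \<delta> s x. {y \<in> C. \<delta> x' y = s \<otimes> w})" using x' y by auto
    qed
    have "finite (\<Union>x'\<in>panel G C \<delta> s x. {y \<in> C. \<delta> x' y = s \<otimes> w})"
    proof (rule finite_UN_I)
      show "finite (panel G C \<delta> s x)" using pf s less.prems by blast
      fix x' assume "x' \<in> panel G C \<delta> s x"
      then have "x' \<in> C" unfolding panel_def by auto
      then show "finite {y \<in> C. \<delta> x' y = s \<otimes> w}" using less.hyps[of "s \<otimes> w"] s sw by simp
    qed
    then show ?thesis using sub finite_subset by blast
  qed
qed

lemma ball_finite:
  assumes pf: "\<And>s x. s \<in> S \<Longrightarrow> x \<in> C \<Longrightarrow> finite (panel G C \<delta> s x)"
    and "finite Y" "Y \<subseteq> carrier G" "x \<in> C"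
  shows "finite {y \<in> C. \<delta> x y \<in> Y}"
proof -
  have "{y \<in> C. \<delta> x y \<in> Y} = (\<Union>w\<in>Y. {y \<in> C. \<delta> x y = w})" by auto
  moreover have "finite (\<Union>w\<in>Y. {y \<in> C. \<delta> x y = w})"
    using sphere_finite[OF pf] assms by blast
  ultimately show ?thesis by simp
qed

end



definition zc :: "'c set \<Rightarrow> ('c \<Rightarrow> 'c \<Rightarrow> 'w) \<Rightarrow> ('c \<Rightarrow> 'c \<Rightarrow> 'w) \<Rightarrow> 'c \<Rightarrow> 'c \<Rightarrow> 'w \<Rightarrow> 'c" where
  "zc C1 \<delta>1 \<delta>s c1 c2 u = (THE z. z \<in> C1 \<and> \<delta>1 c1 z = u \<and> \<delta>s c2 z = u)"

locale twin2 = coxsys G S + B1: bldg G S C1 \<delta>1 + B2: bldg G S C2 \<delta>2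
  for G (structure) and S and C1 :: "'c set" and \<delta>1 and C2 :: "'c set" and \<delta>2 +
  fixes \<delta>s :: "'c \<Rightarrow> 'c \<Rightarrow> 'a"
  assumes h1: "twin_half G S C1 \<delta>1 C2 \<delta>s" and h2: "twin_half G S C2 \<delta>2 C1 \<delta>s"
    and inv12: "\<And>x y. x \<in> C1 \<Longrightarrow> y \<in> C2 \<Longrightarrow> \<delta>s x y \<in> carrier G \<and> \<delta>s y x = inv (\<delta>s x y)"
    and disj: "C1 \<inter> C2 = {}"
begin

lemma inv21: "x \<in> C2 \<Longrightarrow> y \<in> C1 \<Longrightarrow> \<delta>s x y \<in> carrier G \<and> \<delta>s y x = inv (\<delta>s x y)"
  using inv12[of y x] by auto

lemma ds_carr: "x \<in> C1 \<Longrightarrow> y \<in> C2 \<Longrightarrow> \<delta>s x y \<in> carrier G" using inv12 by blast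
lemma ds_carr2: "x \<in> C2 \<Longrightarrow> y \<in> C1 \<Longrightarrow> \<delta>s x y \<in> carrier G" using inv21 by blast

lemma swap: "twin2 G S C2 \<delta>2 C1 \<delta>1 \<delta>s"
  by (rule twin2.intro[OF coxsys_axioms B2.bldg_axioms B1.bldg_axioms]) (unfold_locales, use h1 h2 inv21 disj in auto)

lemma Tw2: "x \<in> C1 \<Longrightarrow> y \<in> C2 \<Longrightarrow> x' \<in> C1 \<Longrightarrow> s \<in> S \<Longrightarrow> \<delta>1 x' x = s \<Longrightarrow>
   len (s \<otimes> \<delta>s x y) + 1 = len (\<delta>s x y) \<Longrightarrow> \<delta>s x' y = s \<otimes> \<delta>s x y"
  and Tw3: "x \<in> C1 \<Longrightarrow> y \<in> C2 \<Longrightarrow> s \<in> S \<Longrightarrow> \<exists>x'\<in>C1. \<delta>1 x' x = s \<and> \<delta>s x' y = s \<otimes> \<delta>s x y"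
  using h1 unfolding twin_half_def by blast+

lemma Tw2': assumes "x \<in> C1" "y \<in> C2" "x' \<in> C1" "s \<in> S" "\<delta>1 x' x = s"
  shows "\<delta>s x' y = s \<otimes> \<delta>s x y \<or> \<delta>s x' y = \<delta>s x y"
proof -
  define w where "w = \<delta>s x y"
  have w: "w \<in> carrier G" using ds_carr assms w_def by simp
  have sw: "s \<otimes> w \<in> carrier G" using w assms S_carr by simp
  have ssw: "s \<otimes> (s \<otimes> w) = w" using w assms S_carr S_inv1 by (simp add: m_assoc[symmetric])
  show ?thesis
  proof (cases "len (s \<otimes> w) + 1 = len w")
    case True then show ?thesis using Tw2[OF assms] w_def by blast
  next
    case False
    then have L: "len (s \<otimes> (s \<otimes> w)) + 1 = len (s \<otimes> w)" using len_sw[OF assms(4) w] ssw by auto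
    obtain x1 where x1: "x1 \<in> C1" "\<delta>1 x1 x = s" "\<delta>s x1 y = s \<otimes> w" using Tw3[OF assms(1,2,4)] w_def by blast
    show ?thesis
    proof (cases "x' = x1")
      case True then show ?thesis using x1 w_def by simp
    next
      case False
      have "\<delta>1 x' x1 = s" using B1.panel_trans[OF assms(1,3) x1(1) assms(4,5) x1(2) False] .
      then have "\<delta>s x' y = s \<otimes> \<delta>s x1 y" using Tw2[OF x1(1) assms(2,3,4)] L x1(3) by simp
      then show ?thesis using x1(3) ssw w_def by simp
    qed
  qed
qed

end
locale opp2 = twin2 +
  fixes c1 c2 assumes c1: "c1 \<in> C1" and c2: "c2 \<in> C2" and o12: "\<delta>s c1 c2 = \<one>"
begin

lemma o21: "\<delta>s c2 c1 = \<one>" using inv12[OF c1 c2] o12 by simp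

lemma step_ex: assumes a: "a \<in> carrier G" and s: "s \<in> S" and L: "len (a \<otimes> s) = len a + 1"
  and z': "z' \<in> C1" "\<delta>1 c1 z' = a" "\<delta>s c2 z' = a"
  shows "\<exists>x1\<in>C1. \<delta>1 x1 z' = s \<and> \<delta>1 c1 x1 = a \<otimes> s \<and> \<delta>s c2 x1 = a \<otimes> s"
proof -
  have sc: "s \<in> carrier G" using s S_carr by simp
  have e1: "\<delta>s z' c2 = inv a" using inv21[OF c2 z'(1)] z' by simp
  obtain x1 where x1: "x1 \<in> C1" "\<delta>1 x1 z' = s" "\<delta>s x1 c2 = s \<otimes> \<delta>s z' c2" using Tw3[OF z'(1) c2 s] by blast
  have "\<delta>s c2 x1 = inv (\<delta>s x1 c2)" using inv12[OF x1(1) c2] by simp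
  also have "\<dots> = inv (s \<otimes> inv a)" using x1(3) e1 by simp
  also have "\<dots> = a \<otimes> s" using a s sc by (simp add: inv_mult_group S_inv)
  finally have d2: "\<delta>s c2 x1 = a \<otimes> s" .
  have e2: "\<delta>1 z' c1 = inv a" using B1.d_sym[OF c1 z'(1)] z' by simp
  have "s \<otimes> inv a = inv (a \<otimes> s)" using inv_aS a s by simp
  moreover have "len (inv (a \<otimes> s)) = len (inv a) + 1" using len_inv a sc L by simp
  ultimately have "len (s \<otimes> \<delta>1 z' c1) = len (\<delta>1 z' c1) + 1" using e2 by simp
  then have "\<delta>1 x1 c1 = s \<otimes> \<delta>1 z' c1" using B1.WD2b[OF z'(1) c1 x1(1) s x1(2)] by blast
  then have "\<delta>1 x1 c1 = inv (a \<otimes> s)" using e2 inv_aS a s by simp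
  then have "\<delta>1 c1 x1 = a \<otimes> s" using B1.d_sym[OF x1(1) c1] a sc by simp
  then show ?thesis using x1 d2 by blast
qed

lemma z_ex: "u \<in> carrier G \<Longrightarrow> \<exists>z\<in>C1. \<delta>1 c1 z = u \<and> \<delta>s c2 z = u"
proof (induction "len u" arbitrary: u rule: less_induct)
  case less
  show ?case
  proof (cases "u = \<one>")
    case True then show ?thesis using c1 o21 B1.d_refl[OF c1] by (intro bexI[of _ c1]) auto
  next
    case False
    obtain s where s: "s \<in> S" "len (u \<otimes> s) + 1 = len u" using right_descent[OF less.prems False] by blast
    define a where "a = u \<otimes> s"
    have a: "a \<in> carrier G" using a_def s less.prems S_carr by simp
    have ua: "u = a \<otimes> s" using a_def aSS less.prems s by simp
    have La: "len u = len a + 1" using s(2) a_def by simp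
    obtain z' where z': "z' \<in> C1" "\<delta>1 c1 z' = a" "\<delta>s c2 z' = a" using less.hyps[of a] a La by auto
    have "len (a \<otimes> s) = len a + 1" using ua La by simp
    from step_ex[OF a s(1) this z'] show ?thesis using ua by blast
  qed
qed

lemma z_uniq: "u \<in> carrier G \<Longrightarrow> z \<in> C1 \<Longrightarrow> z' \<in> C1 \<Longrightarrow> \<delta>1 c1 z = u \<Longrightarrow> \<delta>s c2 z = u \<Longrightarrow>
   \<delta>1 c1 z' = u \<Longrightarrow> \<delta>s c2 z' = u \<Longrightarrow> z = z'"
proof (induction "len u" arbitrary: u z z' rule: less_induct)
  case less
  show ?case
  proof (cases "u = \<one>")
    case True then show ?thesis using less.prems c1 B1.d_one by metis
  next
    case False
    obtain s where s: "s \<in> S" "len (u \<otimes> s) + 1 = len u" using right_descent[OF less.prems(1) False] by blast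
    define a where "a = u \<otimes> s"
    have a: "a \<in> carrier G" using a_def s less.prems S_carr by simp
    have sc: "s \<in> carrier G" using s S_carr by simp
    have ia: "s \<otimes> inv u = inv a" using a_def inv_aS[OF less.prems(1) s(1)] SSa less.prems s by simp
    have Lau: "len u = len a + 1" using s(2) a_def by simp
    have "len (inv u) = len u" "len (inv a) = len a" using len_inv a less.prems by auto
    then have La: "len (s \<otimes> inv u) + 1 = len (inv u)" using ia Lau by simp
    have down: "\<exists>x1\<in>C1. \<delta>1 x1 y = s \<and> \<delta>1 c1 x1 = a \<and> \<delta>s c2 x1 = a"
      if y: "y \<in> C1" "\<delta>1 c1 y = u" "\<delta>s c2 y = u" for y
    proof -
      obtain x1 where x1: "x1 \<in> C1" "\<delta>1 x1 y = s" "\<delta>1 x1 c1 = s \<otimes> \<delta>1 y c1" using B1.WD3[OF y(1) c1 s(1)] by blast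
      have "\<delta>1 y c1 = inv u" using B1.d_sym[OF c1 y(1)] y by simp
      then have "\<delta>1 x1 c1 = inv a" using x1(3) ia by simp
      then have g1: "\<delta>1 c1 x1 = a" using B1.d_sym[OF x1(1) c1] a by simp
      have yc: "\<delta>s y c2 = inv u" using inv21[OF c2 y(1)] y by simp
      have "\<delta>s x1 c2 = s \<otimes> \<delta>s y c2" using Tw2[OF y(1) c2 x1(1) s(1) x1(2)] La yc by simp
      then have "\<delta>s x1 c2 = inv a" using yc ia by simp
      then have "\<delta>s c2 x1 = a" using inv12[OF x1(1) c2] a by simp
      then show ?thesis using x1 g1 by blast
    qed
    obtain x1 where x1: "x1 \<in> C1" "\<delta>1 x1 z = s" "\<delta>1 c1 x1 = a" "\<delta>s c2 x1 = a" using down less.prems by blast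
    obtain x2 where x2: "x2 \<in> C1" "\<delta>1 x2 z' = s" "\<delta>1 c1 x2 = a" "\<delta>s c2 x2 = a" using down less.prems by blast
    have "x1 = x2" using less.hyps[of a x1 x2] a x1 x2 Lau by simp
    show ?thesis
    proof (rule ccontr)
      assume ne: "z \<noteq> z'"
      have "\<delta>1 z x1 = s" using B1.adj_sym[OF less.prems(2) x1(1) s(1) x1(2)] .
      moreover have "\<delta>1 z' x1 = s" using B1.adj_sym[OF less.prems(3) x1(1) s(1)] x2 \<open>x1 = x2\<close> by simp
      ultimately have "\<delta>1 z' z = s" using B1.panel_trans[OF x1(1) less.prems(3) less.prems(2) s(1)] ne by metis
      moreover have zc: "\<delta>s z c2 = inv u" using inv21[OF c2 less.prems(2)] less.prems by simp
      ultimately have "\<delta>s z' c2 = s \<otimes> inv u" using Tw2[OF less.prems(2) c2 less.prems(3) s(1)] La by simp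
      moreover have "\<delta>s z' c2 = inv u" using inv21[OF c2 less.prems(3)] less.prems by simp
      moreover have "s \<otimes> inv u \<noteq> inv u" using S_neq1'[of "inv u" s] s(1) less.prems(1) by simp
      ultimately show False by simp
    qed
  qed
qed

abbreviation z where "z \<equiv> zc C1 \<delta>1 \<delta>s c1 c2"

lemma z_prop: assumes "u \<in> carrier G" shows "z u \<in> C1" "\<delta>1 c1 (z u) = u" "\<delta>s c2 (z u) = u"
proof -
  obtain x where x: "x \<in> C1" "\<delta>1 c1 x = u" "\<delta>s c2 x = u" using z_ex assms by blast
  have "z u = x" unfolding zc_def
  proof (rule the_equality)
    show "x \<in> C1 \<and> \<delta>1 c1 x = u \<and> \<delta>s c2 x = u" using x by simp
    fix y assume "y \<in> C1 \<and> \<delta>1 c1 y = u \<and> \<delta>s c2 y = u"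
    then show "y = x" using z_uniq[OF assms, of y x] x by blast
  qed
  then show "z u \<in> C1" "\<delta>1 c1 (z u) = u" "\<delta>s c2 (z u) = u" using x by auto
qed

lemma z_eq: assumes "u \<in> carrier G" "x \<in> C1" "\<delta>1 c1 x = u" "\<delta>s c2 x = u" shows "z u = x"
  using z_uniq[OF assms(1) z_prop(1)[OF assms(1)] assms(2) z_prop(2,3)[OF assms(1)] assms(3,4)] .

lemma z_one: "z \<one> = c1" using z_eq[of "\<one>" c1] c1 o21 by simp

lemma adj_up: assumes a: "a \<in> carrier G" and s: "s \<in> S" and L: "len (a \<otimes> s) = len a + 1"
  shows "\<delta>1 (z (a \<otimes> s)) (z a) = s"
proof -
  obtain x1 where x1: "x1 \<in> C1" "\<delta>1 x1 (z a) = s" "\<delta>1 c1 x1 = a \<otimes> s" "\<delta>s c2 x1 = a \<otimes> s"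
    using step_ex[OF a s L z_prop[OF a]] by blast
  have "z (a \<otimes> s) = x1" using z_eq[OF _ x1(1,3,4)] a s S_carr by simp
  then show ?thesis using x1 by simp
qed

lemma adj: assumes a: "a \<in> carrier G" and s: "s \<in> S" shows "\<delta>1 (z a) (z (a \<otimes> s)) = s"
proof -
  have as: "a \<otimes> s \<in> carrier G" using a s S_carr by simp
  show ?thesis
  proof (cases "len (a \<otimes> s) = len a + 1")
    case True
    show ?thesis using B1.adj_sym[OF z_prop(1)[OF a] z_prop(1)[OF as] s adj_up[OF a s True]] .
  next
    case False
    then have "len ((a \<otimes> s) \<otimes> s) = len (a \<otimes> s) + 1" using len_ws[OF s a] aSS a s by simp
    then have "\<delta>1 (z ((a \<otimes> s) \<otimes> s)) (z (a \<otimes> s)) = s" using adj_up[OF as s] by simp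
    then show ?thesis using aSS a s by simp
  qed
qed

lemma zdist0: "v \<in> carrier G \<Longrightarrow> a \<in> carrier G \<Longrightarrow> \<delta>1 (z a) (z (a \<otimes> v)) = v"
proof (induction "len v" arbitrary: v rule: less_induct)
  case less
  show ?case
  proof (cases "v = \<one>")
    case True then show ?thesis using less.prems z_prop by simp
  next
    case False
    obtain s where s: "s \<in> S" "len (v \<otimes> s) + 1 = len v" using right_descent[OF less.prems(1) False] by blast
    define v' where "v' = v \<otimes> s"
    have v': "v' \<in> carrier G" using v'_def s less.prems S_carr by simp
    have vv: "v = v' \<otimes> s" using v'_def aSS less.prems s by simp
    have av': "a \<otimes> v' \<in> carrier G" using v' less.prems by simp
    have Lv: "len v = len v' + 1" using s(2) v'_def by simp
    have IH: "\<delta>1 (z a) (z (a \<otimes> v')) = v'" using less.hyps[of v'] v' Lv less.prems by simp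
    have "\<delta>1 (z (a \<otimes> v')) (z ((a \<otimes> v') \<otimes> s)) = s" using adj[OF av' s(1)] .
    moreover have "(a \<otimes> v') \<otimes> s = a \<otimes> v" using vv v' less.prems s S_carr by (simp add: m_assoc)
    ultimately have ad0: "\<delta>1 (z (a \<otimes> v')) (z (a \<otimes> v)) = s" by simp
    have av: "a \<otimes> v \<in> carrier G" using less.prems by simp
    have zav': "z (a \<otimes> v') \<in> C1" and zav: "z (a \<otimes> v) \<in> C1" and za: "z a \<in> C1"
      using z_prop(1)[OF av'] z_prop(1)[OF av] z_prop(1)[OF less.prems(2)] by auto
    have ad: "\<delta>1 (z (a \<otimes> v)) (z (a \<otimes> v')) = s" using B1.adj_sym[OF zav zav' s(1) ad0] .
    have d0: "\<delta>1 (z (a \<otimes> v')) (z a) = inv v'" using B1.d_sym[OF za zav'] IH by simp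
    have iv: "inv v = s \<otimes> inv v'" using inv_aS[OF v' s(1)] vv by simp
    have "len (inv v) = len v" using len_inv less.prems by simp
    moreover have "len (inv v') = len v'" using len_inv v' by simp
    ultimately have "len (s \<otimes> inv v') = len (inv v') + 1" using iv Lv by simp
    then have "\<delta>1 (z (a \<otimes> v)) (z a) = s \<otimes> inv v'"
      using B1.WD2b[OF zav' za zav s(1) ad] d0 by simp
    then have "\<delta>1 (z (a \<otimes> v)) (z a) = inv v" using inv_aS[OF v' s(1)] vv by simp
    then show ?thesis using B1.d_sym[OF zav za] less.prems by simp
  qed
qed

lemma zdist: "a \<in> carrier G \<Longrightarrow> b \<in> carrier G \<Longrightarrow> \<delta>1 (z a) (z b) = inv a \<otimes> b"
  using zdist0[of "inv a \<otimes> b" a] by (simp add: m_assoc[symmetric])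

lemma swap_opp: "opp2 G S C2 \<delta>2 C1 \<delta>1 \<delta>s c2 c1"
  by (rule opp2.intro[OF swap]) (unfold_locales, use c1 c2 o21 in auto)

end

context coxsys begin

lemma root_connect:
  assumes s: "s \<in> S"
    and step: "\<And>y r. y \<in> carrier G \<Longrightarrow> r \<in> S \<Longrightarrow> len (s \<otimes> y) = len y + 1 \<Longrightarrow>
        len (s \<otimes> (y \<otimes> r)) = len (y \<otimes> r) + 1 \<Longrightarrow> R y = R (y \<otimes> r)"
    and y: "y \<in> carrier G" "len (s \<otimes> y) = len y + 1"
  shows "R \<one> = R y"
proof -
  have "red ws \<Longrightarrow> len (s \<otimes> word_prod G ws) = len (word_prod G ws) + 1 \<Longrightarrow> R \<one> = R (word_prod G ws)" for ws
  proof (induction ws rule: rev_induct)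
    case Nil then show ?case by simp
  next
    case (snoc r ws)
    have rw: "red ws" "red [r]" using red_append[OF snoc.prems(1)] by auto
    have wS: "set ws \<subseteq> S" and rS: "r \<in> S" using snoc.prems(1) red_def by auto
    define p where "p = word_prod G ws"
    have p: "p \<in> carrier G" using wp_closed wS p_def by simp
    have e: "word_prod G (ws @ [r]) = p \<otimes> r" using wp_append[OF wS] rS p_def S_carr by simp
    have lp: "len p = length ws" using rw red_def p_def by simp
    have ly: "len (p \<otimes> r) = length ws + 1" using snoc.prems(1) red_def e by simp
    have pp: "len (s \<otimes> p) = len p + 1"
    proof (rule ccontr)
      assume "\<not> ?thesis"
      then have a: "len (s \<otimes> p) + 1 = len p" using len_sw[OF s p] by auto
      have "len ((s \<otimes> p) \<otimes> r) \<le> len (s \<otimes> p) + len r" using len_mult s p rS S_carr by simp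
      moreover have "(s \<otimes> p) \<otimes> r = s \<otimes> (p \<otimes> r)" using s p rS S_carr by (simp add: m_assoc)
      ultimately have "len (s \<otimes> (p \<otimes> r)) \<le> len p" using a len_S[OF rS] by simp
      then show False using snoc.prems(2) e ly lp by simp
    qed
    have "R \<one> = R p" using snoc.IH rw pp p_def by simp
    also have "\<dots> = R (p \<otimes> r)" using step[OF p rS pp] snoc.prems(2) e by simp
    finally show ?case using e by simp
  qed
  moreover obtain ws where "red ws" "word_prod G ws = y" using red_exists y by blast
  ultimately show ?thesis using y by blast
qed

end

context opp2 begin

abbreviation z2 where "z2 \<equiv> zc C2 \<delta>2 \<delta>s c2 c1"

lemma z2_prop: "u \<in> carrier G \<Longrightarrow> z2 u \<in> C2" "u \<in> carrier G \<Longrightarrow> \<delta>2 c2 (z2 u) = u"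
  "u \<in> carrier G \<Longrightarrow> \<delta>s c1 (z2 u) = u"
  using opp2.z_prop[OF swap_opp] by auto

lemma z2adj: "a \<in> carrier G \<Longrightarrow> s \<in> S \<Longrightarrow> \<delta>2 (z2 a) (z2 (a \<otimes> s)) = s"
  using opp2.adj[OF swap_opp] by blast

lemma z2dist: "a \<in> carrier G \<Longrightarrow> b \<in> carrier G \<Longrightarrow> \<delta>2 (z2 a) (z2 b) = inv a \<otimes> b"
  using opp2.zdist[OF swap_opp] by blast

lemma z2_one: "z2 \<one> = c2" using opp2.z_one[OF swap_opp] .

lemma Tw2'_2: "x \<in> C2 \<Longrightarrow> y \<in> C1 \<Longrightarrow> x' \<in> C2 \<Longrightarrow> s \<in> S \<Longrightarrow> \<delta>2 x' x = s \<Longrightarrow>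
   \<delta>s x' y = s \<otimes> \<delta>s x y \<or> \<delta>s x' y = \<delta>s x y"
  using twin2.Tw2'[OF swap] by blast

lemma cross: "u \<in> carrier G \<Longrightarrow> v \<in> carrier G \<Longrightarrow> \<delta>s (z u) (z2 v) = inv u \<otimes> v"
proof (induction "len u" arbitrary: u v rule: less_induct)
  case less
  show ?case
  proof (cases "u = \<one>")
    case True then show ?thesis using z_one z2_prop less.prems by simp
  next
    case False
    obtain s where s: "s \<in> S" "len (u \<otimes> s) + 1 = len u" using right_descent[OF less.prems(1) False] by blast
    define u' where "u' = u \<otimes> s"
    have sc: "s \<in> carrier G" using s S_carr by simp
    have u': "u' \<in> carrier G" using u'_def s less.prems S_carr by simp
    have uu: "u = u' \<otimes> s" using u'_def aSS less.prems s by simp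
    have Lu: "len u = len u' + 1" using s(2) u'_def by simp
    define c where "c = inv u'"
    have c: "c \<in> carrier G" using c_def u' by simp
    have IH: "\<And>b. b \<in> carrier G \<Longrightarrow> \<delta>s (z u') (z2 b) = c \<otimes> b" using less.hyps[of u'] u' Lu c_def by simp
    have iu: "inv u = s \<otimes> c" using inv_aS[OF u' s(1)] uu c_def by simp
    have zu: "z u \<in> C1" and zu': "z u' \<in> C1" using z_prop less.prems u' by auto
    have ad0: "\<delta>1 (z u') (z u) = s" using adj[OF u' s(1)] uu by simp
    have ad: "\<delta>1 (z u) (z u') = s" using B1.adj_sym[OF zu zu' s(1) ad0] .
    define Q where "Q b \<longleftrightarrow> \<delta>s (z u) (z2 b) = s \<otimes> (c \<otimes> b)" for b
    have stepQ: "Q (b \<otimes> r)" if b: "b \<in> carrier G" and r: "r \<in> S"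
      and p1: "len (s \<otimes> (c \<otimes> b)) = len (c \<otimes> b) + 1"
      and p2: "len (s \<otimes> (c \<otimes> (b \<otimes> r))) = len (c \<otimes> (b \<otimes> r)) + 1" and q: "Q b" for b r
    proof -
      have rc: "r \<in> carrier G" using r S_carr by simp
      have br: "b \<otimes> r \<in> carrier G" using b rc by simp
      define m where "m = c \<otimes> b"
      have m: "m \<in> carrier G" using m_def c b by simp
      have cbr: "c \<otimes> (b \<otimes> r) = m \<otimes> r" using m_def c b rc by (simp add: m_assoc)
      have y: "z2 b \<in> C2" and y': "z2 (b \<otimes> r) \<in> C2" using z2_prop b br by auto
      have a0: "\<delta>2 (z2 b) (z2 (b \<otimes> r)) = r" using z2adj b r by blast
      have a1: "\<delta>2 (z2 (b \<otimes> r)) (z2 b) = r" using B2.adj_sym[OF y' y r a0] .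
      have q': "\<delta>s (z u) (z2 b) = s \<otimes> m" using q Q_def m_def by simp
      have sm: "s \<otimes> m \<in> carrier G" using sc m by simp
      have i1: "\<delta>s (z2 b) (z u) = inv (s \<otimes> m)" using inv12[OF zu y] q' by simp
      have "\<delta>s (z2 (b \<otimes> r)) (z u) = r \<otimes> \<delta>s (z2 b) (z u) \<or> \<delta>s (z2 (b \<otimes> r)) (z u) = \<delta>s (z2 b) (z u)"
        using Tw2'_2[OF y zu y' r a1] .
      moreover have "\<delta>s (z u) (z2 (b \<otimes> r)) = inv (\<delta>s (z2 (b \<otimes> r)) (z u))"
        using inv21[OF y' zu] by simp
      moreover have "inv (r \<otimes> inv (s \<otimes> m)) = (s \<otimes> m) \<otimes> r" using inv_Sa[of "inv (s \<otimes> m)" r] sm r by simp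
      ultimately have A: "\<delta>s (z u) (z2 (b \<otimes> r)) = (s \<otimes> m) \<otimes> r \<or> \<delta>s (z u) (z2 (b \<otimes> r)) = s \<otimes> m"
        using i1 sm by auto
      have "\<delta>s (z u) (z2 (b \<otimes> r)) = s \<otimes> \<delta>s (z u') (z2 (b \<otimes> r)) \<or> \<delta>s (z u) (z2 (b \<otimes> r)) = \<delta>s (z u') (z2 (b \<otimes> r))"
        using Tw2'[OF zu' y' zu s(1) ad] .
      then have B: "\<delta>s (z u) (z2 (b \<otimes> r)) = s \<otimes> (m \<otimes> r) \<or> \<delta>s (z u) (z2 (b \<otimes> r)) = m \<otimes> r"
        using IH[OF br] cbr by simp
      have smr: "s \<otimes> (m \<otimes> r) = (s \<otimes> m) \<otimes> r" using sc m rc by (simp add: m_assoc)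
      have "\<delta>s (z u) (z2 (b \<otimes> r)) = (s \<otimes> m) \<otimes> r"
      proof (rule ccontr)
        assume ne: "\<not> ?thesis"
        then have e: "\<delta>s (z u) (z2 (b \<otimes> r)) = s \<otimes> m" using A by blast
        then have "s \<otimes> m = m \<otimes> r" using B ne smr by auto
        then have "s \<otimes> (m \<otimes> r) = s \<otimes> (s \<otimes> m)" by simp
        then have "s \<otimes> (m \<otimes> r) = m" using SSa[OF m s(1)] by simp
        then have "len m = len (m \<otimes> r) + 1" using p2 cbr by simp
        moreover have "len (s \<otimes> m) = len m + 1" using p1 m_def by simp
        ultimately show False using \<open>s \<otimes> m = m \<otimes> r\<close> by simp
      qed
      then show ?thesis unfolding Q_def using cbr smr by simp
    qed
    define R where "R y \<longleftrightarrow> Q (inv c \<otimes> y)" for y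
    have stepR: "R y = R (y \<otimes> r)" if y: "y \<in> carrier G" and r: "r \<in> S"
      and p1: "len (s \<otimes> y) = len y + 1" and p2: "len (s \<otimes> (y \<otimes> r)) = len (y \<otimes> r) + 1" for y r
    proof -
      have rc: "r \<in> carrier G" using r S_carr by simp
      define b where "b = inv c \<otimes> y"
      have b: "b \<in> carrier G" using b_def c y by simp
      have cb: "c \<otimes> b = y" using b_def c y by (simp add: m_assoc[symmetric])
      have cbr: "c \<otimes> (b \<otimes> r) = y \<otimes> r" using cb c b rc by (simp add: m_assoc[symmetric])
      have bry: "inv c \<otimes> (y \<otimes> r) = b \<otimes> r" using b_def c y rc by (simp add: m_assoc)
      have br: "b \<otimes> r \<in> carrier G" using b rc by simp
      have brr: "(b \<otimes> r) \<otimes> r = b" using aSS b r by simp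
      have f: "Q b \<Longrightarrow> Q (b \<otimes> r)" using stepQ[OF b r] p1 p2 cb cbr by simp
      have g: "Q (b \<otimes> r) \<Longrightarrow> Q b" using stepQ[OF br r] p1 p2 cb cbr brr by simp
      show ?thesis unfolding R_def bry b_def[symmetric] using f g by blast
    qed
    have "len (inv u) = len u" "len c = len u'" using len_inv less.prems u' c_def by auto
    then have pc: "len (s \<otimes> c) = len c + 1" using iu Lu by simp
    have Rc: "R c" unfolding R_def Q_def
    proof -
      have "inv c \<otimes> c = \<one>" using c by simp
      moreover have "\<delta>s (z u) c2 = inv u" using inv21[OF c2 zu] z_prop less.prems by simp
      ultimately show "\<delta>s (z u) (z2 (inv c \<otimes> c)) = s \<otimes> (c \<otimes> (inv c \<otimes> c))" using z2_one iu c by simp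
    qed
    have R1: "R \<one>" using root_connect[of s R c, OF s(1) stepR c pc] Rc by blast
    show ?thesis
    proof (cases "len (s \<otimes> (c \<otimes> v)) + 1 = len (c \<otimes> v)")
      case True
      have "\<delta>s (z u) (z2 v) = s \<otimes> \<delta>s (z u') (z2 v)"
        using Tw2[OF zu' z2_prop(1)[OF less.prems(2)] zu s(1) ad] True IH[OF less.prems(2)] by simp
      then show ?thesis using IH[OF less.prems(2)] iu c less.prems sc by (simp add: m_assoc)
    next
      case False
      have cv: "c \<otimes> v \<in> carrier G" using c less.prems by simp
      have pv: "len (s \<otimes> (c \<otimes> v)) = len (c \<otimes> v) + 1" using False len_sw[OF s(1) cv] by auto
      have "R (c \<otimes> v)" using root_connect[of s R "c \<otimes> v", OF s(1) stepR cv pv] R1 by blast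
      then have "Q v" unfolding R_def using c less.prems by (simp add: m_assoc[symmetric])
      then show ?thesis unfolding Q_def using iu c less.prems sc by (simp add: m_assoc)
    qed
  qed
qed

lemma apt: "twin_apartment G C1 \<delta>1 C2 \<delta>2 \<delta>s (z ` carrier G \<union> z2 ` carrier G)"
  unfolding twin_apartment_def
proof (intro exI conjI ballI)
  fix u assume "u \<in> carrier G"
  then show "z u \<in> C1" "z2 u \<in> C2" using z_prop z2_prop by auto
next
  fix u v assume u: "u \<in> carrier G" and v: "v \<in> carrier G"
  show "\<delta>1 (z u) (z v) = inv u \<otimes> v" using zdist u v .
  show "\<delta>2 (z2 u) (z2 v) = inv u \<otimes> v" using z2dist u v .
  show "\<delta>s (z u) (z2 v) = inv u \<otimes> v" using cross u v .
  have "\<delta>s (z2 u) (z v) = inv (\<delta>s (z v) (z2 u))" using inv12[OF z_prop(1)[OF v] z2_prop(1)[OF u]] by blast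
  then show "\<delta>s (z2 u) (z v) = inv u \<otimes> v" using cross[OF v u] u v by (simp add: inv_mult_group)
qed simp

end




definition aptfg :: "('w, 'a) monoid_scheme \<Rightarrow> 'c set \<Rightarrow> ('c \<Rightarrow> 'c \<Rightarrow> 'w) \<Rightarrow>
    'c set \<Rightarrow> ('c \<Rightarrow> 'c \<Rightarrow> 'w) \<Rightarrow> ('c \<Rightarrow> 'c \<Rightarrow> 'w) \<Rightarrow> ('w \<Rightarrow> 'c) \<Rightarrow> ('w \<Rightarrow> 'c) \<Rightarrow> 'c set \<Rightarrow> bool" where
  "aptfg W Cp \<delta>p Cm \<delta>m \<delta>s f g \<Sigma> \<longleftrightarrow>
     (\<forall>u\<in>carrier W. f u \<in> Cp \<and> g u \<in> Cm) \<and>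
       (\<forall>u\<in>carrier W. \<forall>v\<in>carrier W.
          \<delta>p (f u) (f v) = inv\<^bsub>W\<^esub> u \<otimes>\<^bsub>W\<^esub> v \<and> \<delta>m (g u) (g v) = inv\<^bsub>W\<^esub> u \<otimes>\<^bsub>W\<^esub> v \<and>
          \<delta>s (f u) (g v) = inv\<^bsub>W\<^esub> u \<otimes>\<^bsub>W\<^esub> v \<and> \<delta>s (g u) (f v) = inv\<^bsub>W\<^esub> u \<otimes>\<^bsub>W\<^esub> v) \<and>
       \<Sigma> = f ` carrier W \<union> g ` carrier W"

lemma twin_apartment_aptfg: "twin_apartment W Cp \<delta>p Cm \<delta>m \<delta>s \<Sigma> \<longleftrightarrow> (\<exists>f g. aptfg W Cp \<delta>p Cm \<delta>m \<delta>s f g \<Sigma>)"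
  unfolding twin_apartment_def aptfg_def by blast

lemma aptfg_swap: "aptfg W Cp \<delta>p Cm \<delta>m \<delta>s f g \<Sigma> \<Longrightarrow> aptfg W Cm \<delta>m Cp \<delta>p \<delta>s g f \<Sigma>"
  unfolding aptfg_def by blast

lemma twin_apartment_swap: "twin_apartment W Cp \<delta>p Cm \<delta>m \<delta>s \<Sigma> \<Longrightarrow> twin_apartment W Cm \<delta>m Cp \<delta>p \<delta>s \<Sigma>"
  using aptfg_swap twin_apartment_aptfg by metis

lemma sta_swap: "strongly_transitive_action Gr act W Cp \<delta>p Cm \<delta>m \<delta>s \<Longrightarrow>
   strongly_transitive_action Gr act W Cm \<delta>m Cp \<delta>p \<delta>s"
proof -
  assume a: "strongly_transitive_action Gr act W Cp \<delta>p Cm \<delta>m \<delta>s"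
  have ta: "twin_apartment W Cp \<delta>p Cm \<delta>m \<delta>s \<Sigma> \<longleftrightarrow> twin_apartment W Cm \<delta>m Cp \<delta>p \<delta>s \<Sigma>" for \<Sigma>
    using twin_apartment_swap by blast
  show ?thesis using a unfolding strongly_transitive_action_def ta
    by (simp add: Un_commute)
qed

locale bact = bldg +
  fixes Gr :: "('g, 'e) monoid_scheme" and act :: "'g \<Rightarrow> 'c \<Rightarrow> 'c"
  assumes Ggrp: "group Gr"
    and aclosed: "\<And>g x. g \<in> carrier Gr \<Longrightarrow> x \<in> C \<Longrightarrow> act g x \<in> C"
    and aone: "\<And>x. x \<in> C \<Longrightarrow> act \<one>\<^bsub>Gr\<^esub> x = x"
    and amult: "\<And>g h x. g \<in> carrier Gr \<Longrightarrow> h \<in> carrier Gr \<Longrightarrow> x \<in> C \<Longrightarrow> act (g \<otimes>\<^bsub>Gr\<^esub> h) x = act g (act h x)"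
    and aiso: "\<And>g x y. g \<in> carrier Gr \<Longrightarrow> x \<in> C \<Longrightarrow> y \<in> C \<Longrightarrow> \<delta> (act g x) (act g y) = \<delta> x y"
begin

interpretation Gr: group Gr by (rule Ggrp)

lemma ainv: "g \<in> carrier Gr \<Longrightarrow> x \<in> C \<Longrightarrow> act g (act (inv\<^bsub>Gr\<^esub> g) x) = x"
  using amult[of g "inv\<^bsub>Gr\<^esub> g" x] aone by simp

lemma ainv': "g \<in> carrier Gr \<Longrightarrow> x \<in> C \<Longrightarrow> act (inv\<^bsub>Gr\<^esub> g) (act g x) = x"
  using amult[of "inv\<^bsub>Gr\<^esub> g" g x] aone by simp

lemma res_subgroup: assumes Xs: "Xs \<subseteq> S" and x: "x \<in> C"
  shows "subgroup {g \<in> carrier Gr. \<delta> x (act g x) \<in> generate G Xs} Gr"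
proof -
  have Y: "subgroup (generate G Xs) G" using generate_is_subgroup Xs S_sub by blast
  show ?thesis
  proof (rule subgroup.intro)
    show "{g \<in> carrier Gr. \<delta> x (act g x) \<in> generate G Xs} \<subseteq> carrier Gr" by blast
  next
    fix g h assume g: "g \<in> {g \<in> carrier Gr. \<delta> x (act g x) \<in> generate G Xs}"
      and h: "h \<in> {g \<in> carrier Gr. \<delta> x (act g x) \<in> generate G Xs}"
    have gc: "g \<in> carrier Gr" and hc: "h \<in> carrier Gr" using g h by auto
    have hx: "act h x \<in> C" and gx: "act g x \<in> C" and ghx: "act g (act h x) \<in> C" using aclosed gc hc x by auto
    have "\<delta> (act g x) (act g (act h x)) = \<delta> x (act h x)" using aiso[OF gc x hx] .
    then have "\<delta> (act g x) (act g (act h x)) \<in> generate G Xs" using h by simp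
    then have "\<delta> x (act g (act h x)) \<in> generate G Xs" using residue[OF Xs x gx ghx] g by simp
    then show "g \<otimes>\<^bsub>Gr\<^esub> h \<in> {g \<in> carrier Gr. \<delta> x (act g x) \<in> generate G Xs}"
      using amult[OF gc hc x] gc hc by simp
  next
    show "\<one>\<^bsub>Gr\<^esub> \<in> {g \<in> carrier Gr. \<delta> x (act g x) \<in> generate G Xs}"
      using aone x generate.one by simp
  next
    fix g assume g: "g \<in> {g \<in> carrier Gr. \<delta> x (act g x) \<in> generate G Xs}"
    have gc: "g \<in> carrier Gr" using g by auto
    have ix: "act (inv\<^bsub>Gr\<^esub> g) x \<in> C" using aclosed gc x by simp
    have gx: "act g x \<in> C" using aclosed gc x by simp
    have "\<delta> x (act (inv\<^bsub>Gr\<^esub> g) x) = \<delta> (act g x) (act g (act (inv\<^bsub>Gr\<^esub> g) x))" using aiso[OF gc x ix] by simp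
    also have "\<dots> = \<delta> (act g x) x" using ainv gc x by simp
    also have "\<dots> = inv (\<delta> x (act g x))" using d_sym[OF x gx] .
    finally show "inv\<^bsub>Gr\<^esub> g \<in> {g \<in> carrier Gr. \<delta> x (act g x) \<in> generate G Xs}"
      using g subgroup.m_inv_closed[OF Y] gc by simp
  qed
qed

lemma conj_char: assumes n: "n \<in> carrier Gr" and x: "x \<in> C" and Y: "Y \<subseteq> carrier G"
  shows "conjset Gr n {h \<in> carrier Gr. \<delta> x (act h x) \<in> Y} = {g \<in> carrier Gr. \<delta> (act n x) (act g (act n x)) \<in> Y}"
proof
  show "conjset Gr n {h \<in> carrier Gr. \<delta> x (act h x) \<in> Y} \<subseteq> {g \<in> carrier Gr. \<delta> (act n x) (act g (act n x)) \<in> Y}"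
  proof
    fix g assume "g \<in> conjset Gr n {h \<in> carrier Gr. \<delta> x (act h x) \<in> Y}"
    then obtain h where h: "h \<in> carrier Gr" "\<delta> x (act h x) \<in> Y" and g: "g = (n \<otimes>\<^bsub>Gr\<^esub> h) \<otimes>\<^bsub>Gr\<^esub> inv\<^bsub>Gr\<^esub> n"
      unfolding conjset_def r_coset_def l_coset_def by auto
    have gc: "g \<in> carrier Gr" using g h n by simp
    have "g \<otimes>\<^bsub>Gr\<^esub> n = n \<otimes>\<^bsub>Gr\<^esub> h" using g h n by (simp add: Gr.m_assoc)
    then have "act g (act n x) = act n (act h x)" using amult[OF gc n x] amult[OF n h(1) x] by simp
    moreover have "\<delta> (act n x) (act n (act h x)) = \<delta> x (act h x)" using aiso[OF n x] aclosed h x by simp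
    ultimately show "g \<in> {g \<in> carrier Gr. \<delta> (act n x) (act g (act n x)) \<in> Y}" using gc h by simp
  qed
next
  show "{g \<in> carrier Gr. \<delta> (act n x) (act g (act n x)) \<in> Y} \<subseteq> conjset Gr n {h \<in> carrier Gr. \<delta> x (act h x) \<in> Y}"
  proof
    fix g assume g: "g \<in> {g \<in> carrier Gr. \<delta> (act n x) (act g (act n x)) \<in> Y}"
    have gc: "g \<in> carrier Gr" using g by simp
    define h where "h = (inv\<^bsub>Gr\<^esub> n \<otimes>\<^bsub>Gr\<^esub> g) \<otimes>\<^bsub>Gr\<^esub> n"
    have hc: "h \<in> carrier Gr" using h_def n gc by simp
    have nh: "n \<otimes>\<^bsub>Gr\<^esub> h = g \<otimes>\<^bsub>Gr\<^esub> n" using h_def n gc by (simp add: Gr.m_assoc[symmetric])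
    have gh: "g = (n \<otimes>\<^bsub>Gr\<^esub> h) \<otimes>\<^bsub>Gr\<^esub> inv\<^bsub>Gr\<^esub> n" using nh n gc by (simp add: Gr.m_assoc)
    have "act n (act h x) = act g (act n x)" using amult[OF gc n x] amult[OF n hc x] nh by simp
    moreover have "\<delta> (act n x) (act n (act h x)) = \<delta> x (act h x)" using aiso[OF n x] aclosed hc x by simp
    ultimately have "\<delta> x (act h x) \<in> Y" using g by simp
    then show "g \<in> conjset Gr n {h \<in> carrier Gr. \<delta> x (act h x) \<in> Y}"
      unfolding conjset_def r_coset_def l_coset_def using hc gh by blast
  qed
qed

end

context coxsys begin
lemma inv_cancel3: "a \<in> carrier G \<Longrightarrow> b \<in> carrier G \<Longrightarrow> c \<in> carrier G \<Longrightarrow> inv (a \<otimes> b) \<otimes> (a \<otimes> c) = inv b \<otimes> c"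
  by (simp add: inv_mult_group m_assoc[symmetric]) (simp add: m_assoc)
lemma inv_solve: assumes "a \<in> carrier G" "b \<in> carrier G" "c \<in> carrier G" "inv a \<otimes> b = c"
  shows "b = a \<otimes> c"
proof -
  have "a \<otimes> c = a \<otimes> (inv a \<otimes> b)" using assms(4) by simp
  also have "\<dots> = b" using assms(1,2) by (simp add: m_assoc[symmetric])
  finally show ?thesis by simp
qed
end

locale stg = opp2 +
  fixes Gr :: "('g, 'e) monoid_scheme" and act :: "'g \<Rightarrow> 'c \<Rightarrow> 'c" and \<Sigma> and f0 g0
  assumes st: "strongly_transitive_action Gr act G C1 \<delta>1 C2 \<delta>2 \<delta>s"
    and apf: "aptfg G C1 \<delta>1 C2 \<delta>2 \<delta>s f0 g0 \<Sigma>" and c1S: "c1 \<in> \<Sigma>" and c2S: "c2 \<in> \<Sigma>"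
begin

lemma Ggrp: "group Gr" using st[unfolded strongly_transitive_action_def] by (rule conjunct1)

interpretation Gr: group Gr by (rule Ggrp)

lemmas stc = st[unfolded strongly_transitive_action_def]
lemmas stc2 = stc[THEN conjunct2, THEN conjunct1]
lemmas stc3 = stc[THEN conjunct2, THEN conjunct2, THEN conjunct1]
lemmas stc4 = stc[THEN conjunct2, THEN conjunct2, THEN conjunct2, THEN conjunct1]
lemmas stc5 = stc[THEN conjunct2, THEN conjunct2, THEN conjunct2, THEN conjunct2, THEN conjunct1]
lemmas stc6 = stc[THEN conjunct2, THEN conjunct2, THEN conjunct2, THEN conjunct2, THEN conjunct2]

lemma cl1: "g \<in> carrier Gr \<Longrightarrow> x \<in> C1 \<Longrightarrow> act g x \<in> C1" using stc2 by blast
lemma cl2: "g \<in> carrier Gr \<Longrightarrow> x \<in> C2 \<Longrightarrow> act g x \<in> C2" using stc2 by blast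
lemma aone: "x \<in> C1 \<union> C2 \<Longrightarrow> act \<one>\<^bsub>Gr\<^esub> x = x" using stc3 by blast
lemma amult: "g \<in> carrier Gr \<Longrightarrow> h \<in> carrier Gr \<Longrightarrow> x \<in> C1 \<union> C2 \<Longrightarrow> act (g \<otimes>\<^bsub>Gr\<^esub> h) x = act g (act h x)"
  using stc4 by blast
lemma iso1: "g \<in> carrier Gr \<Longrightarrow> x \<in> C1 \<Longrightarrow> y \<in> C1 \<Longrightarrow> \<delta>1 (act g x) (act g y) = \<delta>1 x y" using stc5 by blast
lemma iso2: "g \<in> carrier Gr \<Longrightarrow> x \<in> C2 \<Longrightarrow> y \<in> C2 \<Longrightarrow> \<delta>2 (act g x) (act g y) = \<delta>2 x y" using stc5 by blast
lemma isos: "g \<in> carrier Gr \<Longrightarrow> x \<in> C1 \<Longrightarrow> y \<in> C2 \<Longrightarrow> \<delta>s (act g x) (act g y) = \<delta>s x y" using stc5 by blast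
lemma trans: "twin_apartment G C1 \<delta>1 C2 \<delta>2 \<delta>s A \<Longrightarrow> twin_apartment G C1 \<delta>1 C2 \<delta>2 \<delta>s A' \<Longrightarrow>
        x \<in> A \<Longrightarrow> x' \<in> A' \<Longrightarrow> (x \<in> C1 \<and> x' \<in> C1 \<or> x \<in> C2 \<and> x' \<in> C2) \<Longrightarrow>
        \<exists>g\<in>carrier Gr. act g ` A = A' \<and> act g x = x'"
  using stc6 by blast

lemma bact1: "bact G S C1 \<delta>1 Gr act"
  by (rule bact.intro[OF B1.bldg_axioms], unfold_locales)
     (use Ggrp cl1 aone amult iso1 in auto)

lemma bact2: "bact G S C2 \<delta>2 Gr act"
  by (rule bact.intro[OF B2.bldg_axioms], unfold_locales)
     (use Ggrp cl2 aone amult iso2 in auto)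

lemma f0: "u \<in> carrier G \<Longrightarrow> f0 u \<in> C1" and g0: "u \<in> carrier G \<Longrightarrow> g0 u \<in> C2"
  and f0d: "u \<in> carrier G \<Longrightarrow> v \<in> carrier G \<Longrightarrow> \<delta>1 (f0 u) (f0 v) = inv u \<otimes> v"
  and fgd: "u \<in> carrier G \<Longrightarrow> v \<in> carrier G \<Longrightarrow> \<delta>s (f0 u) (g0 v) = inv u \<otimes> v"
  and gfd: "u \<in> carrier G \<Longrightarrow> v \<in> carrier G \<Longrightarrow> \<delta>s (g0 u) (f0 v) = inv u \<otimes> v"
  and Seq: "\<Sigma> = f0 ` carrier G \<union> g0 ` carrier G"
  using apf unfolding aptfg_def by blast+

lemma Sig1: "x \<in> \<Sigma> \<Longrightarrow> x \<in> C1 \<Longrightarrow> \<exists>a\<in>carrier G. x = f0 a"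
  using Seq g0 disj by auto

lemma Sig2: "x \<in> \<Sigma> \<Longrightarrow> x \<in> C2 \<Longrightarrow> \<exists>a\<in>carrier G. x = g0 a"
  using Seq f0 disj by auto

lemma SigC: "\<Sigma> \<subseteq> C1 \<union> C2" using Seq f0 g0 by auto

definition u0 where "u0 = (SOME u. u \<in> carrier G \<and> c1 = f0 u \<and> c2 = g0 u)"

lemma u0: "u0 \<in> carrier G" "c1 = f0 u0" "c2 = g0 u0"
proof -
  obtain a where a: "a \<in> carrier G" "c1 = f0 a" using Sig1 c1S c1 by blast
  obtain b where b: "b \<in> carrier G" "c2 = g0 b" using Sig2 c2S c2 by blast
  have "inv a \<otimes> b = \<one>" using fgd[OF a(1) b(1)] a b o12 by simp
  then have "b = a \<otimes> \<one>" using inv_solve[OF a(1) b(1) one_closed] by blast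
  then have "b = a" using a by simp
  then have "\<exists>u. u \<in> carrier G \<and> c1 = f0 u \<and> c2 = g0 u" using a b by blast
  then have "u0 \<in> carrier G \<and> c1 = f0 u0 \<and> c2 = g0 u0" unfolding u0_def by (rule someI_ex)
  then show "u0 \<in> carrier G" "c1 = f0 u0" "c2 = g0 u0" by auto
qed

abbreviation N where "N \<equiv> set_stab Gr act \<Sigma>"

lemma N_carr: "m \<in> N \<Longrightarrow> m \<in> carrier Gr" and N_img: "m \<in> N \<Longrightarrow> act m ` \<Sigma> = \<Sigma>"
  unfolding set_stab_def by auto

lemma N_pos: assumes m: "m \<in> N"
  shows "\<exists>a\<in>carrier G. act m c1 = f0 a \<and> act m c2 = g0 a \<and> \<delta>s c1 (act m c2) = inv u0 \<otimes> a"
proof -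
  have mc: "m \<in> carrier Gr" using N_carr m by blast
  have "act m c1 \<in> \<Sigma>" using N_img[OF m] c1S by blast
  then obtain a where a: "a \<in> carrier G" "act m c1 = f0 a" using Sig1 cl1[OF mc c1] by blast
  have "act m c2 \<in> \<Sigma>" using N_img[OF m] c2S by blast
  then obtain b where b: "b \<in> carrier G" "act m c2 = g0 b" using Sig2 cl2[OF mc c2] by blast
  have "\<delta>s (act m c1) (act m c2) = \<one>" using isos[OF mc c1 c2] o12 by simp
  then have "inv a \<otimes> b = \<one>" using fgd[OF a(1) b(1)] a b by simp
  then have "b = a \<otimes> \<one>" using inv_solve[OF a(1) b(1) one_closed] by blast
  then have ba: "b = a" using a by simp
  have "\<delta>s c1 (act m c2) = inv u0 \<otimes> a" using fgd[OF u0(1) a(1)] u0 b ba by simp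
  then show ?thesis using a b ba by blast
qed

lemma N_rel: assumes m: "m \<in> N"
  shows "\<delta>1 c1 (act m c1) = \<delta>s c1 (act m c2)" "\<delta>s c2 (act m c1) = \<delta>s c1 (act m c2)"
proof -
  obtain a where a: "a \<in> carrier G" "act m c1 = f0 a" "act m c2 = g0 a" "\<delta>s c1 (act m c2) = inv u0 \<otimes> a"
    using N_pos[OF m] by blast
  show "\<delta>1 c1 (act m c1) = \<delta>s c1 (act m c2)" using f0d[OF u0(1) a(1)] u0 a by simp
  show "\<delta>s c2 (act m c1) = \<delta>s c1 (act m c2)" using gfd[OF u0(1) a(1)] u0 a by simp
qed

lemma N_ex: assumes v: "v \<in> carrier G"
  shows "\<exists>m\<in>N. act m c1 = f0 (u0 \<otimes> v) \<and> \<delta>s c1 (act m c2) = v"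
proof -
  have uv: "u0 \<otimes> v \<in> carrier G" using u0 v by simp
  have ta: "twin_apartment G C1 \<delta>1 C2 \<delta>2 \<delta>s \<Sigma>" using apf twin_apartment_aptfg by blast
  have "f0 (u0 \<otimes> v) \<in> \<Sigma>" using Seq uv by blast
  then obtain m where m: "m \<in> carrier Gr" "act m ` \<Sigma> = \<Sigma>" "act m c1 = f0 (u0 \<otimes> v)"
    using trans[OF ta ta c1S] c1 f0[OF uv] by blast
  then have mN: "m \<in> N" unfolding set_stab_def by blast
  obtain a where a: "a \<in> carrier G" "act m c1 = f0 a" "\<delta>s c1 (act m c2) = inv u0 \<otimes> a"
    using N_pos[OF mN] by blast
  have "\<delta>1 (f0 u0) (f0 a) = \<delta>1 (f0 u0) (f0 (u0 \<otimes> v))" using a m by simp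
  moreover have "\<delta>1 (f0 u0) (f0 a) = inv u0 \<otimes> a" using f0d[OF u0(1) a(1)] .
  moreover have "\<delta>1 (f0 u0) (f0 (u0 \<otimes> v)) = inv u0 \<otimes> (u0 \<otimes> v)" using f0d[OF u0(1) uv] .
  ultimately have "inv u0 \<otimes> a = inv u0 \<otimes> (u0 \<otimes> v)" by simp
  also have "\<dots> = v" using u0 v by (simp add: m_assoc[symmetric])
  finally show ?thesis using mN m a by auto
qed

end

context stg begin

interpretation Gr: group Gr by (rule Ggrp)
interpretation A1: bact G S C1 \<delta>1 Gr act by (rule bact1)
interpretation A2: bact G S C2 \<delta>2 Gr act by (rule bact2)

abbreviation B1 where "B1 \<equiv> chamber_stab Gr act c1"

lemma twin2_full: "twin2 G S C1 \<delta>1 C2 \<delta>2 \<delta>s"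
  by (rule twin2_axioms)

lemma N_one: "\<one>\<^bsub>Gr\<^esub> \<in> N"
proof -
  have "act \<one>\<^bsub>Gr\<^esub> ` \<Sigma> = \<Sigma>" using aone SigC by (force simp: image_iff)
  then show ?thesis unfolding set_stab_def by simp
qed

lemma orbit: "v \<in> carrier G \<Longrightarrow> x \<in> C1 \<Longrightarrow> \<delta>1 c1 x = v \<Longrightarrow>
  \<exists>b\<in>B1. \<exists>m\<in>N. act (b \<otimes>\<^bsub>Gr\<^esub> m) c1 = x \<and> \<delta>s c1 (act m c2) = v"
proof (induction "len v" arbitrary: v x rule: less_induct)
  case less
  show ?case
  proof (cases "v = \<one>")
    case True
    then have "x = c1" using less.prems B1.d_one c1 by metis
    moreover have "\<one>\<^bsub>Gr\<^esub> \<in> B1" using aone c1 unfolding chamber_stab_def by simp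
    ultimately show ?thesis using N_one aone c1 c2 o12 True by (intro bexI) auto
  next
    case False
    obtain s where s: "s \<in> S" "len (v \<otimes> s) + 1 = len v" using right_descent[OF less.prems(1) False] by blast
    define v' where "v' = v \<otimes> s"
    have sc: "s \<in> carrier G" using s S_carr by simp
    have v': "v' \<in> carrier G" using v'_def s less.prems S_carr by simp
    have vv: "v = v' \<otimes> s" using v'_def aSS less.prems s by simp
    have Lv: "len v = len v' + 1" using s(2) v'_def by simp
    have x: "x \<in> C1" using less.prems by simp
    obtain y where y: "y \<in> C1" "\<delta>1 y x = s" "\<delta>1 y c1 = s \<otimes> \<delta>1 x c1" using B1.WD3[OF x c1 s(1)] by blast
    have "\<delta>1 x c1 = inv v" using B1.d_sym[OF c1 x] less.prems by simp
    then have "\<delta>1 y c1 = inv v'" using y(3) inv_aS[OF v' s(1)] vv SSa v' s(1) by simp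
    then have yv: "\<delta>1 c1 y = v'" using B1.d_sym[OF y(1) c1] v' by simp
    obtain b m where b: "b \<in> B1" and m: "m \<in> N" and bm: "act (b \<otimes>\<^bsub>Gr\<^esub> m) c1 = y"
      and mv: "\<delta>s c1 (act m c2) = v'"
      using less.hyps[of v' y] v' Lv y(1) yv by auto
    have bc: "b \<in> carrier Gr" and bf: "act b c1 = c1" using b unfolding chamber_stab_def by auto
    have mc: "m \<in> carrier Gr" using N_carr m by blast
    define bi where "bi = inv\<^bsub>Gr\<^esub> b"
    have bic: "bi \<in> carrier Gr" using bi_def bc by simp
    define x2 where "x2 = act bi x"
    define y2 where "y2 = act m c1"
    have x2: "x2 \<in> C1" using x2_def cl1 bic x by simp
    have y2: "y2 \<in> C1" using y2_def cl1 mc c1 by simp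
    have y_eq: "y = act b y2" using bm amult[OF bc mc] c1 y2_def by simp
    have bix: "act bi c1 = c1" using A1.ainv'[OF bc c1] bf bi_def by simp
    have x2v: "\<delta>1 c1 x2 = v" using iso1[OF bic c1 x] bix x2_def less.prems by simp
    have "act bi y = y2" using y_eq A1.ainv'[OF bc y2] bi_def by simp
    then have y2x2: "\<delta>1 y2 x2 = s" using iso1[OF bic y(1) x] x2_def y(2) by simp
    have x2y2: "\<delta>1 x2 y2 = s" using B1.adj_sym[OF x2 y2 s(1) y2x2] .
    obtain a where a: "a \<in> carrier G" "act m c1 = f0 a" "\<delta>s c1 (act m c2) = inv u0 \<otimes> a"
      using N_pos[OF m] by blast
    have "a = u0 \<otimes> v'" using inv_solve[OF u0(1) a(1) v'] a(3) mv by simp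
    then have y2f: "y2 = f0 (u0 \<otimes> v')" using a y2_def by simp
    have uv: "u0 \<otimes> v \<in> carrier G" and uv': "u0 \<otimes> v' \<in> carrier G" using u0 less.prems v' by auto
    define cc where "cc = g0 (u0 \<otimes> v)"
    have cc: "cc \<in> C2" using g0 uv cc_def by simp
    have "\<delta>s y2 cc = inv (u0 \<otimes> v') \<otimes> (u0 \<otimes> v)" using fgd[OF uv' uv] y2f cc_def by simp
    also have "\<dots> = inv v' \<otimes> v" using inv_cancel3 u0 v' less.prems by simp
    also have "\<dots> = s" using vv v' sc by (simp add: m_assoc[symmetric])
    finally have y2c: "\<delta>s y2 cc = s" .
    have "\<delta>s x2 cc = s \<otimes> \<delta>s y2 cc \<or> \<delta>s x2 cc = \<delta>s y2 cc" using Tw2'[OF y2 cc x2 s(1) x2y2] .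
    then have "\<delta>s x2 cc = \<one> \<or> \<delta>s x2 cc = s" using y2c S_inv1 s by simp
    moreover have "\<delta>s x2 cc \<noteq> s"
    proof
      assume e: "\<delta>s x2 cc = s"
      have "len (s \<otimes> s) + 1 = len s" using S_inv1 s len_S by simp
      then have "\<delta>s y2 cc = s \<otimes> s" using Tw2[OF x2 cc y2 s(1) y2x2] e by simp
      then show False using y2c S_inv1 s one_notin by simp
    qed
    ultimately have o: "\<delta>s x2 cc = \<one>" by blast
    have op: "opp2 G S C1 \<delta>1 C2 \<delta>2 \<delta>s x2 cc"
      unfolding opp2_def opp2_axioms_def using twin2_axioms x2 cc o by blast
    define A where "A = zc C1 \<delta>1 \<delta>s x2 cc ` carrier G \<union> zc C2 \<delta>2 \<delta>s cc x2 ` carrier G"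
    have taA: "twin_apartment G C1 \<delta>1 C2 \<delta>2 \<delta>s A" using opp2.apt[OF op] A_def by simp
    have ta: "twin_apartment G C1 \<delta>1 C2 \<delta>2 \<delta>s \<Sigma>" using apf twin_apartment_aptfg by blast
    have iv: "inv v \<in> carrier G" using less.prems by simp
    have "\<delta>s c1 cc = v" using fgd[OF u0(1) uv] u0 cc_def less.prems(1) by (simp add: m_assoc[symmetric])
    then have ccc1: "\<delta>s cc c1 = inv v" using inv12[OF c1 cc] by simp
    have x2c1: "\<delta>1 x2 c1 = inv v" using B1.d_sym[OF c1 x2] x2v by simp
    have "zc C1 \<delta>1 \<delta>s x2 cc (inv v) = c1" using opp2.z_eq[OF op iv c1 x2c1 ccc1] .
    then have c1A: "c1 \<in> A" using A_def iv by force
    have "zc C1 \<delta>1 \<delta>s x2 cc \<one> = x2" using opp2.z_one[OF op] .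
    then have x2A: "x2 \<in> A" using A_def by force
    obtain h where h: "h \<in> carrier Gr" "act h ` \<Sigma> = A" "act h c1 = c1"
      using trans[OF ta taA c1S c1A] c1 by blast
    obtain p where p: "p \<in> \<Sigma>" "x2 = act h p" using x2A h(2) by blast
    have pC1: "p \<in> C1"
    proof (rule ccontr)
      assume "p \<notin> C1"
      then have "p \<in> C2" using SigC p by blast
      then have "x2 \<in> C2" using cl2[OF h(1)] p by simp
      then show False using x2 disj by blast
    qed
    obtain t where t: "t \<in> carrier G" "p = f0 t" using Sig1[OF p(1) pC1] by blast
    have "\<delta>1 c1 p = v" using iso1[OF h(1) c1 pC1] h(3) p(2) x2v by simp
    then have "inv u0 \<otimes> t = v" using f0d[OF u0(1) t(1)] u0 t by simp
    then have tv: "t = u0 \<otimes> v" using inv_solve[OF u0(1) t(1) less.prems(1)] by simp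
    obtain m' where m': "m' \<in> N" "act m' c1 = f0 (u0 \<otimes> v)" "\<delta>s c1 (act m' c2) = v"
      using N_ex[OF less.prems(1)] by blast
    have m'c: "m' \<in> carrier Gr" using N_carr m' by blast
    have pm: "p = act m' c1" using t tv m' by simp
    have "act b x2 = x" using A1.ainv[OF bc x] x2_def bi_def by simp
    then have xe: "x = act b (act h (act m' c1))" using p pm by simp
    have bh: "b \<otimes>\<^bsub>Gr\<^esub> h \<in> carrier Gr" using bc h by simp
    have "act (b \<otimes>\<^bsub>Gr\<^esub> h) c1 = c1" using amult[OF bc h(1)] c1 h(3) bf by simp
    then have bhB: "b \<otimes>\<^bsub>Gr\<^esub> h \<in> B1" using bh unfolding chamber_stab_def by simp
    have m'c1: "act m' c1 \<in> C1" using cl1[OF m'c c1] .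
    have "act ((b \<otimes>\<^bsub>Gr\<^esub> h) \<otimes>\<^bsub>Gr\<^esub> m') c1 = act (b \<otimes>\<^bsub>Gr\<^esub> h) (act m' c1)"
      using amult[OF bh m'c] c1 by simp
    also have "\<dots> = act b (act h (act m' c1))" using amult[OF bc h(1)] m'c1 by simp
    finally have "act ((b \<otimes>\<^bsub>Gr\<^esub> h) \<otimes>\<^bsub>Gr\<^esub> m') c1 = x" using xe by simp
    then show ?thesis using bhB m' by blast
  qed
qed

end

context stg begin

interpretation Gr: group Gr by (rule Ggrp)
interpretation A1: bact G S C1 \<delta>1 Gr act by (rule bact1)

lemma dcu_char: assumes Y: "Y \<subseteq> carrier G"
  shows "double_coset_union Gr act \<delta>s c1 c2 B1 N Y = {g \<in> carrier Gr. \<delta>1 c1 (act g c1) \<in> Y}"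
proof
  show "double_coset_union Gr act \<delta>s c1 c2 B1 N Y \<subseteq> {g \<in> carrier Gr. \<delta>1 c1 (act g c1) \<in> Y}"
  proof
    fix g assume "g \<in> double_coset_union Gr act \<delta>s c1 c2 B1 N Y"
    then obtain n' b b' where n': "n' \<in> N" "\<delta>s c1 (act n' c2) \<in> Y" and b: "b \<in> B1" and b': "b' \<in> B1"
      and g: "g = b \<otimes>\<^bsub>Gr\<^esub> (n' \<otimes>\<^bsub>Gr\<^esub> b')"
      unfolding double_coset_union_def set_mult_def l_coset_def by blast
    have bc: "b \<in> carrier Gr" "act b c1 = c1" using b unfolding chamber_stab_def by auto
    have b'c: "b' \<in> carrier Gr" "act b' c1 = c1" using b' unfolding chamber_stab_def by auto
    have nc: "n' \<in> carrier Gr" using N_carr n' by blast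
    have nc1: "act n' c1 \<in> C1" using cl1[OF nc c1] .
    have "act g c1 = act b (act n' (act b' c1))"
      using g amult[OF bc(1) Gr.m_closed[OF nc b'c(1)]] amult[OF nc b'c(1)] c1 cl1 b'c nc by simp
    then have "act g c1 = act b (act n' c1)" using b'c by simp
    then have "\<delta>1 c1 (act g c1) = \<delta>1 c1 (act n' c1)" using iso1[OF bc(1) c1 nc1] bc(2) by simp
    then have "\<delta>1 c1 (act g c1) \<in> Y" using N_rel(1)[OF n'(1)] n'(2) by simp
    moreover have "g \<in> carrier Gr" using g bc b'c nc by simp
    ultimately show "g \<in> {g \<in> carrier Gr. \<delta>1 c1 (act g c1) \<in> Y}" by simp
  qed
next
  show "{g \<in> carrier Gr. \<delta>1 c1 (act g c1) \<in> Y} \<subseteq> double_coset_union Gr act \<delta>s c1 c2 B1 N Y"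
  proof
    fix g assume g: "g \<in> {g \<in> carrier Gr. \<delta>1 c1 (act g c1) \<in> Y}"
    have gc: "g \<in> carrier Gr" using g by simp
    have gx: "act g c1 \<in> C1" using cl1[OF gc c1] .
    define v where "v = \<delta>1 c1 (act g c1)"
    have vY: "v \<in> Y" using g v_def by simp
    have v: "v \<in> carrier G" using vY Y by blast
    obtain b m where b: "b \<in> B1" and m: "m \<in> N" and bm: "act (b \<otimes>\<^bsub>Gr\<^esub> m) c1 = act g c1"
      and mv: "\<delta>s c1 (act m c2) = v" using orbit[OF v gx] v_def by metis
    have bc: "b \<in> carrier Gr" using b unfolding chamber_stab_def by auto
    have mc: "m \<in> carrier Gr" using N_carr m by blast
    have bmc: "b \<otimes>\<^bsub>Gr\<^esub> m \<in> carrier Gr" using bc mc by simp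
    define b' where "b' = inv\<^bsub>Gr\<^esub> (b \<otimes>\<^bsub>Gr\<^esub> m) \<otimes>\<^bsub>Gr\<^esub> g"
    have b'c: "b' \<in> carrier Gr" using b'_def bmc gc by simp
    have "act b' c1 = act (inv\<^bsub>Gr\<^esub> (b \<otimes>\<^bsub>Gr\<^esub> m)) (act g c1)" using amult b'_def bmc gc c1 by simp
    also have "\<dots> = act (inv\<^bsub>Gr\<^esub> (b \<otimes>\<^bsub>Gr\<^esub> m)) (act (b \<otimes>\<^bsub>Gr\<^esub> m) c1)" using bm by simp
    also have "\<dots> = c1" using A1.ainv'[OF bmc c1] .
    finally have b'B: "b' \<in> B1" using b'c unfolding chamber_stab_def by simp
    have "g = (b \<otimes>\<^bsub>Gr\<^esub> m) \<otimes>\<^bsub>Gr\<^esub> b'" using b'_def bmc gc by (simp add: Gr.m_assoc[symmetric])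
    then have ge: "g = b \<otimes>\<^bsub>Gr\<^esub> (m \<otimes>\<^bsub>Gr\<^esub> b')" using bc mc b'c by (simp add: Gr.m_assoc)
    show "g \<in> double_coset_union Gr act \<delta>s c1 c2 B1 N Y"
      unfolding double_coset_union_def set_mult_def l_coset_def using m mv vY b b'B ge by blast
  qed
qed

lemma dcu_sym: "double_coset_union Gr act \<delta>s c1 c2 B N Y = double_coset_union Gr act \<delta>s c2 c1 B N Y"
proof -
  have "{n'. n' \<in> N \<and> \<delta>s c1 (act n' c2) \<in> Y} = {n'. n' \<in> N \<and> \<delta>s c2 (act n' c1) \<in> Y}"
    using N_rel(2) by auto
  then show ?thesis unfolding double_coset_union_def by simp
qed

lemma stg_swap: "stg G S C2 \<delta>2 C1 \<delta>1 \<delta>s c2 c1 Gr act \<Sigma> g0 f0"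
  unfolding stg_def stg_axioms_def
  using swap_opp sta_swap[OF st] aptfg_swap[OF apf] c1S c2S by blast

end

lemma finite_fibres: assumes "finite (f ` A)" "\<And>a. a \<in> A \<Longrightarrow> finite {x \<in> A. f x = f a}"
  shows "finite A"
proof -
  have "A = (\<Union>p\<in>f ` A. {x \<in> A. f x = p})" by auto
  moreover have "finite (\<Union>p\<in>f ` A. {x \<in> A. f x = p})"
  proof (rule finite_UN_I)
    show "finite (f ` A)" using assms(1) .
    fix p assume "p \<in> f ` A"
    then obtain a where "a \<in> A" "p = f a" by blast
    then show "finite {x \<in> A. f x = p}" using assms(2) by simp
  qed
  ultimately show ?thesis by simp
qed




theorem mainTheorem6:
  fixes W :: "('w, 'a) monoid_scheme" and S :: "'w set"
    and Cp Cm :: "'c set" and \<delta>p \<delta>m \<delta>s :: "'c \<Rightarrow> 'c \<Rightarrow> 'w" and q :: "'w \<Rightarrow> nat"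
    and G :: "('g, 'b) monoid_scheme" and act :: "'g \<Rightarrow> 'c \<Rightarrow> 'c"
    and cp cm :: 'c and \<Sigma> :: "'c set"
    and I J :: "'w set" and w :: 'w and n :: 'g
  assumes tb: "twin_building W S Cp \<delta>p Cm \<delta>m \<delta>s"
    and thick: "panel_sizes W S Cp \<delta>p Cm \<delta>m q"
    and st: "strongly_transitive_action G act W Cp \<delta>p Cm \<delta>m \<delta>s"
    and cp: "cp \<in> Cp" and cm: "cm \<in> Cm" and opp: "\<delta>s cp cm = \<one>\<^bsub>W\<^esub>"
    and app: "twin_apartment W Cp \<delta>p Cm \<delta>m \<delta>s \<Sigma>" and "cp \<in> \<Sigma>" and "cm \<in> \<Sigma>"
    and Tfin: "finite (chamber_stab G act cp \<inter> chamber_stab G act cm)"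
    and IJ: "I \<subseteq> S" "J \<subseteq> S"
    and sph: "finite (generate W I)" "finite (generate W J)"
    and w: "w \<in> carrier W"
    and n: "n \<in> set_stab G act \<Sigma>" "\<delta>s cp (act n cm) = w"
  shows "finite (rcosets\<^bsub>G\<lparr>carrier :=
             double_coset_union G act \<delta>s cp cm (chamber_stab G act cp) (set_stab G act \<Sigma>) (generate W I)
             \<inter> conjset G n (double_coset_union G act \<delta>s cp cm (chamber_stab G act cm) (set_stab G act \<Sigma>) (generate W J))\<rparr>\<^esub>
           (chamber_stab G act cp \<inter> conjset G n (chamber_stab G act cm)))
       \<and> subgroup (double_coset_union G act \<delta>s cp cm (chamber_stab G act cp) (set_stab G act \<Sigma>) (generate W I)
             \<inter> conjset G n (double_coset_union G act \<delta>s cp cm (chamber_stab G act cm) (set_stab G act \<Sigma>) (generate W J))) G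
       \<and> finite (double_coset_union G act \<delta>s cp cm (chamber_stab G act cp) (set_stab G act \<Sigma>) (generate W I)
             \<inter> conjset G n (double_coset_union G act \<delta>s cp cm (chamber_stab G act cm) (set_stab G act \<Sigma>) (generate W J)))"

proof -
  have cs: "coxeter_system W S" and dj: "Cp \<inter> Cm = {}" and bp: "building W S Cp \<delta>p"
    and bm: "building W S Cm \<delta>m"
    and iv: "\<forall>x\<in>Cp. \<forall>y\<in>Cm. \<delta>s x y \<in> carrier W \<and> \<delta>s y x = inv\<^bsub>W\<^esub> (\<delta>s x y)"
    and h1: "twin_half W S Cp \<delta>p Cm \<delta>s" and h2: "twin_half W S Cm \<delta>m Cp \<delta>s"
    using tb unfolding twin_building_def by blast+
  have grpW: "group W" using cs coxeter_system_def by blast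
  have cx: "coxsys W S" by (rule coxsys.intro[OF grpW coxsys_axioms.intro[OF cs]])
  interpret coxsys W S by (rule cx)
  have b1: "bldg W S Cp \<delta>p" by (rule bldg.intro[OF cx bldg_axioms.intro[OF bp]])
  have b2: "bldg W S Cm \<delta>m" by (rule bldg.intro[OF cx bldg_axioms.intro[OF bm]])
  interpret P: bldg W S Cp \<delta>p by (rule b1)
  interpret M: bldg W S Cm \<delta>m by (rule b2)
  have t2: "twin2 W S Cp \<delta>p Cm \<delta>m \<delta>s"
    by (rule twin2.intro[OF cx b1 b2]) (unfold_locales, use h1 h2 iv dj in auto)
  have o2: "opp2 W S Cp \<delta>p Cm \<delta>m \<delta>s cp cm"
    unfolding opp2_def opp2_axioms_def using t2 cp cm opp by blast
  obtain f0 g0 where fg: "aptfg W Cp \<delta>p Cm \<delta>m \<delta>s f0 g0 \<Sigma>" using app twin_apartment_aptfg by blast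
  have sg: "stg W S Cp \<delta>p Cm \<delta>m \<delta>s cp cm G act \<Sigma> f0 g0"
    unfolding stg_def stg_axioms_def using o2 st fg assms(8,9) by blast
  have sg2: "stg W S Cm \<delta>m Cp \<delta>p \<delta>s cm cp G act \<Sigma> g0 f0" using stg.stg_swap[OF sg] .
  have grpG: "group G" using stg.Ggrp[OF sg] .
  interpret GG: group G by (rule grpG)
  have ba1: "bact W S Cp \<delta>p G act" using stg.bact1[OF sg] .
  have ba2: "bact W S Cm \<delta>m G act" using stg.bact1[OF sg2] .
  define Y1 where "Y1 = generate W I"
  define Y2 where "Y2 = generate W J"
  have Y1: "Y1 \<subseteq> carrier W" using generate_incl IJ S_sub Y1_def by blast
  have Y2: "Y2 \<subseteq> carrier W" using generate_incl IJ S_sub Y2_def by blast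
  define N where "N = set_stab G act \<Sigma>"
  have nc: "n \<in> carrier G" using n(1) unfolding set_stab_def by blast
  have ncm: "act n cm \<in> Cm" using stg.cl2[OF sg nc cm] .
  have PI: "double_coset_union G act \<delta>s cp cm (chamber_stab G act cp) N Y1 = {g \<in> carrier G. \<delta>p cp (act g cp) \<in> Y1}"
    using stg.dcu_char[OF sg Y1] N_def by simp
  have PJ: "double_coset_union G act \<delta>s cp cm (chamber_stab G act cm) N Y2 = {g \<in> carrier G. \<delta>m cm (act g cm) \<in> Y2}"
    using stg.dcu_char[OF sg2 Y2] stg.dcu_sym[OF sg] N_def by simp
  have PJ': "conjset G n {g \<in> carrier G. \<delta>m cm (act g cm) \<in> Y2} = {g \<in> carrier G. \<delta>m (act n cm) (act g (act n cm)) \<in> Y2}"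
    using bact.conj_char[OF ba2 nc cm Y2] .
  define H where "H = {g \<in> carrier G. \<delta>p cp (act g cp) \<in> Y1} \<inter> {g \<in> carrier G. \<delta>m (act n cm) (act g (act n cm)) \<in> Y2}"
  have Heq: "double_coset_union G act \<delta>s cp cm (chamber_stab G act cp) (set_stab G act \<Sigma>) (generate W I)
             \<inter> conjset G n (double_coset_union G act \<delta>s cp cm (chamber_stab G act cm) (set_stab G act \<Sigma>) (generate W J)) = H"
    using PI PJ PJ' H_def N_def Y1_def Y2_def by simp
  have sub: "subgroup H G"
    unfolding H_def Y1_def Y2_def
    by (rule GG.subgroups_Inter_pair[OF bact.res_subgroup[OF ba1 IJ(1) cp] bact.res_subgroup[OF ba2 IJ(2) ncm]])
  have pf1: "finite (panel W Cp \<delta>p s x)" if "s \<in> S" "x \<in> Cp" for s x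
  proof -
    have "card (panel W Cp \<delta>p s x) = q s + 1" using thick that unfolding panel_sizes_def by blast
    then show ?thesis using card.infinite by fastforce
  qed
  have pf2: "finite (panel W Cm \<delta>m s x)" if "s \<in> S" "x \<in> Cm" for s x
  proof -
    have "card (panel W Cm \<delta>m s x) = q s + 1" using thick that unfolding panel_sizes_def by blast
    then show ?thesis using card.infinite by fastforce
  qed
  define F1 where "F1 = {y \<in> Cp. \<delta>p cp y \<in> Y1}"
  define F2 where "F2 = {y \<in> Cm. \<delta>m (act n cm) y \<in> Y2}"
  define e where "e = \<delta>m (act n cm) cm"
  define F3 where "F3 = (\<Union>y\<in>F2. {z \<in> Cm. \<delta>m y z = e})"
  have fF1: "finite F1" unfolding F1_def using P.ball_finite[OF pf1 _ Y1 cp] sph(1) Y1_def by blast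
  have fF2: "finite F2" unfolding F2_def using M.ball_finite[OF pf2 _ Y2 ncm] sph(2) Y2_def by blast
  have ec: "e \<in> carrier W" unfolding e_def using M.d_carr[OF ncm cm] .
  have fF3: "finite F3" unfolding F3_def
  proof (rule finite_UN_I[OF fF2])
    fix y assume "y \<in> F2"
    then have "y \<in> Cm" unfolding F2_def by blast
    then show "finite {z \<in> Cm. \<delta>m y z = e}" using M.sphere_finite[OF pf2 ec] by blast
  qed
  define K where "K = {g \<in> carrier G. act g cp \<in> F1 \<and> act g cm \<in> F3}"
  have HK: "H \<subseteq> K"
  proof
    fix g assume g: "g \<in> H"
    have gc: "g \<in> carrier G" using g H_def by blast
    have "act g cp \<in> F1" using g stg.cl1[OF sg gc cp] unfolding H_def F1_def by blast
    moreover have y: "act g (act n cm) \<in> F2" using g stg.cl2[OF sg gc ncm] unfolding H_def F2_def by blast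
    moreover have "\<delta>m (act g (act n cm)) (act g cm) = e" using stg.iso2[OF sg gc ncm cm] e_def by simp
    moreover have "act g cm \<in> Cm" using stg.cl2[OF sg gc cm] .
    ultimately show "g \<in> K" unfolding K_def F3_def using gc by blast
  qed
  define T where "T = chamber_stab G act cp \<inter> chamber_stab G act cm"
  have finK: "finite K"
  proof (rule finite_fibres[where f = "\<lambda>g. (act g cp, act g cm)"])
    have "(\<lambda>g. (act g cp, act g cm)) ` K \<subseteq> F1 \<times> F3" unfolding K_def by auto
    then show "finite ((\<lambda>g. (act g cp, act g cm)) ` K)" using fF1 fF3 finite_subset by blast
  next
    fix a assume a: "a \<in> K"
    have ac: "a \<in> carrier G" using a K_def by blast
    have "{x \<in> K. (act x cp, act x cm) = (act a cp, act a cm)} \<subseteq> (\<lambda>t. a \<otimes>\<^bsub>G\<^esub> t) ` T"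
    proof
      fix x assume x: "x \<in> {x \<in> K. (act x cp, act x cm) = (act a cp, act a cm)}"
      have xc: "x \<in> carrier G" using x K_def by blast
      define t where "t = inv\<^bsub>G\<^esub> a \<otimes>\<^bsub>G\<^esub> x"
      have tc: "t \<in> carrier G" using t_def ac xc by simp
      have "act t cp = act (inv\<^bsub>G\<^esub> a) (act x cp)" using stg.amult[OF sg _ xc] ac cp t_def by simp
      also have "\<dots> = act (inv\<^bsub>G\<^esub> a) (act a cp)" using x by simp
      also have "\<dots> = cp" using bact.ainv'[OF ba1 ac cp] .
      finally have t1: "act t cp = cp" .
      have "act t cm = act (inv\<^bsub>G\<^esub> a) (act x cm)" using stg.amult[OF sg _ xc] ac cm t_def by simp
      also have "\<dots> = act (inv\<^bsub>G\<^esub> a) (act a cm)" using x by simp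
      also have "\<dots> = cm" using bact.ainv'[OF ba2 ac cm] .
      finally have t2: "act t cm = cm" .
      have "t \<in> T" unfolding T_def chamber_stab_def using tc t1 t2 by simp
      moreover have "x = a \<otimes>\<^bsub>G\<^esub> t" using t_def ac xc by (simp add: GG.m_assoc[symmetric])
      ultimately show "x \<in> (\<lambda>t. a \<otimes>\<^bsub>G\<^esub> t) ` T" by blast
    qed
    moreover have "finite ((\<lambda>t. a \<otimes>\<^bsub>G\<^esub> t) ` T)" using Tfin T_def by simp
    ultimately show "finite {x \<in> K. (act x cp, act x cm) = (act a cp, act a cm)}" using finite_subset by blast
  qed
  have finH: "finite H" using finK HK finite_subset by blast
  have finR: "finite (rcosets\<^bsub>G\<lparr>carrier := H\<rparr>\<^esub> (chamber_stab G act cp \<inter> conjset G n (chamber_stab G act cm)))"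
    unfolding RCOSETS_def using finH by simp
  show ?thesis using finR sub finH Heq by simp
qed



end
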